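(* Let $z\in\mathbb{C}$ with $\mathrm{Im}(z)>0$, $q=e^{2\pi i z}$ (with $q^{\alpha}:=e^{2\pi i\alpha z}$ for real $\alpha$), let $a>0$ and $b\in\mathbb{R}$. Put $$\psi_1(t,q)=\sum_{n=1}^{\infty}(-1)^n n\,q^{an^2+bn}\cos(2nt),\qquad \psi_2(t,q)=-\sum_{n=1}^{\infty}(-1)^n n\,q^{an^2-bn}\cos(2nt).$$ Then $$\int_0^{\pi}\psi_1(t,q)\log\left(\frac{\vartheta_4(t,q)}{\vartheta_4(0,q)}\right)dt=-\pi\sum_{n=1}^{\infty}\frac{(-1)^nq^{an^2+(b+1)n}}{1-q^{2n}},$$ $$\int_0^{\pi}\psi_2(t,q)\log\left(\frac{\vartheta_4(t,q)}{\vartheta_4(0,q)}\right)dt=\pi\sum_{n=1}^{\infty}\frac{(-1)^nq^{an^2+(-b+1)n}}{1-q^{2n}}.$$ Consequently, with $\psi(t,q)=\psi_1(t,q)+\psi_2(t,q)=\sum_{n=-\infty}^{\infty}(-1)^nq^{an^2+bn}n\cos(2nt)$ and $I=\int_0^{\pi}\psi(t,q)\log\left(\frac{\vartheta_4(t,q)}{\vartheta_4(0,q)}\right)dt$, one has $$I=-\pi\sum_{n\in\mathbb{Z}\setminus\{0\}}\frac{(-1)^nq^{an^2+bn}}{q^{-n}-q^{n}} \quad\text{and}\quad \frac{I}{\pi}=\frac{1}{2}\sum_{n\in\mathbb{Z}\setminus\{0\}}\frac{(-1)^n\exp\left(2\pi i(an^2+bn)z\right)}{\sinh(2\pi i n 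z)}.$$
   Context: $\vartheta_4(t,q)=\sum_{n=-\infty}^{\infty}(-1)^nq^{n^2}e^{2int}$. The logarithm $\log(\vartheta_4(t,q)/\vartheta_4(0,q))$ is the branch continuous in $t\in[0,\pi]$ that vanishes at $t=0$. *)

theory Defs
  imports "HOL-Analysis.Analysis"
begin

text \<open>Nome power convention: for q = exp(2 pi i z) and real alpha,
  q^alpha := exp(2 pi i alpha z).\<close>
definition qpow :: "complex \<Rightarrow> real \<Rightarrow> complex" where
  "qpow z \<alpha> = exp (2 * of_real pi * \<i> * of_real \<alpha> * z)"

definition theta4 :: "complex \<Rightarrow> real \<Rightarrow> complex" where
  "theta4 z t = (\<Sum>\<^sub>\<infinity>n::int. (-1) powi n * qpow z (of_int n ^ 2)
                    * exp (2 * \<i> * of_int n * of_real t))"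

definition psi1 :: "complex \<Rightarrow> real \<Rightarrow> real \<Rightarrow> real \<Rightarrow> complex" where
  "psi1 z a b t = (\<Sum>m. let n = Suc m in
      (-1) ^ n * of_nat n * qpow z (a * real n ^ 2 + b * real n)
      * of_real (cos (2 * real n * t)))"

definition psi2 :: "complex \<Rightarrow> real \<Rightarrow> real \<Rightarrow> real \<Rightarrow> complex" where
  "psi2 z a b t = - (\<Sum>m. let n = Suc m in
      (-1) ^ n * of_nat n * qpow z (a * real n ^ 2 - b * real n)
      * of_real (cos (2 * real n * t)))"

definition psi :: "complex \<Rightarrow> real \<Rightarrow> real \<Rightarrow> real \<Rightarrow> complex" where
  "psi z a b t = psi1 z a b t + psi2 z a b t"

end

theory Submission
  imports Defs "HOL-Real_Asymp.Real_Asymp"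
begin

locale jt = fixes q :: complex assumes nq: "norm q < 1" and q0: "q \<noteq> 0"
begin

lemma nq_pow_le: "n > 0 \<Longrightarrow> norm q ^ n \<le> norm q"
  using nq by (metis less_eq_real_def norm_ge_zero power_decreasing_iff power_one_right
      not_gr_zero One_nat_def Suc_leI power_decreasing)

lemma one_minus_ge: "n > 0 \<Longrightarrow> 1 - norm q \<le> norm (1 - q^n)"
proof -
  assume n: "n > 0"
  have "1 - norm (q^n) \<le> norm (1 - q^n)"
    by (metis norm_one norm_triangle_ineq2)
  moreover have "norm (q^n) \<le> norm q" using nq_pow_le[OF n] by (simp add: norm_power)
  ultimately show ?thesis by linarith
qed

lemma one_minus_nz: "n > 0 \<Longrightarrow> 1 - q^n \<noteq> 0"
  using one_minus_ge[of n] nq by auto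

fun ca :: "nat \<Rightarrow> complex" where
  "ca 0 = 1"
| "ca (Suc j) = (- (q ^ (2*j+1)) * ca j) / (1 - q ^ (2*j+2))"

lemma ca_rec: "ca (Suc j) * (1 - q^(2*j+2)) = - (q^(2*j+1)) * ca j"
  using one_minus_nz[of "2*j+2"] by simp

lemma ca_summable: "summable (\<lambda>j. norm (ca j * y^j))"
proof -
  have "(\<lambda>n. norm q ^ n * norm y) \<longlonglongrightarrow> 0 * norm y"
    by (intro tendsto_mult tendsto_const LIMSEQ_power_zero) (use nq in auto)
  then have "eventually (\<lambda>n. norm q ^ n * norm y < (1 - norm q)/2) sequentially"
    using nq by (intro order_tendstoD(2)) auto
  then obtain N where N: "\<And>n. n \<ge> N \<Longrightarrow> norm q ^ n * norm y < (1 - norm q)/2"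
    by (auto simp: eventually_sequentially)
  show ?thesis
  proof (rule summable_ratio_test[where c="1/2" and N=N])
    fix n assume n: "N \<le> n"
    have d: "1 - norm q \<le> norm (1 - q^(2*n+2))" by (rule one_minus_ge) simp
    have pos: "0 < 1 - norm q" using nq by simp
    have "norm (ca (Suc n) * y^Suc n) = norm q ^ (2*n+1) * norm y / norm (1 - q^(2*n+2)) * norm (ca n * y^n)"
      by (simp add: norm_mult norm_divide norm_power field_simps)
    also have "\<dots> \<le> ((1 - norm q)/2) / (1 - norm q) * norm (ca n * y^n)"
    proof (intro mult_right_mono frac_le)
      show "norm q ^ (2*n+1) * norm y \<le> (1 - norm q)/2"
        using N[of "2*n+1"] n by linarith
    qed (use d pos in auto)
    also have "\<dots> = 1/2 * norm (norm (ca n * y^n))" using pos by (simp add: field_simps)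
    finally show "norm (norm (ca (Suc n) * y ^ Suc n)) \<le> 1/2 * norm (norm (ca n * y^n))" by simp
  qed simp
qed

definition E :: "complex \<Rightarrow> complex" where "E y = (\<Sum>j. ca j * y^j)"

lemma E_summable: "summable (\<lambda>j. ca j * y^j)"
  by (rule summable_norm_cancel[OF ca_summable])

lemma E_fe: "E y = (1 - q*y) * E (q^2*y)"
proof -
  define g where "g j = ca j * (q^2*y)^j" for j
  have sg: "g sums E (q^2*y)" unfolding g_def E_def using E_summable by (simp add: summable_sums)
  define h where "h j = (if j = 0 then 0 else q*y*g(j-1))" for j
  have sh: "h sums (q*y*E(q^2*y))"
  proof -
    have "(\<lambda>j. h (Suc j)) sums (q*y*E(q^2*y))" unfolding h_def using sums_mult[OF sg, of "q*y"] by simp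
    then show ?thesis using sums_Suc_iff[of h] by (simp add: h_def)
  qed
  have "(\<lambda>j. g j - h j) sums (E (q^2*y) - q*y*E(q^2*y))" by (rule sums_diff[OF sg sh])
  moreover have "(\<lambda>j. g j - h j) = (\<lambda>j. ca j * y^j)"
  proof
    fix j show "g j - h j = ca j * y^j"
    proof (cases j)
      case 0 then show ?thesis by (simp add: g_def h_def)
    next
      case (Suc i)
      have p1: "(q^2*y)^Suc i = q^(2*i+2)*y^Suc i"
        by (simp only: power_mult_distrib power_mult[symmetric]) (simp add: mult_2_right)
      have p2: "q*y*(q^2*y)^i = q^(2*i+1)*y^Suc i"
        by (simp add: power_mult_distrib power_mult[symmetric])
      have "ca (Suc i) * y^Suc i - (ca (Suc i) * (q^2*y)^Suc i - q*y*(ca i * (q^2*y)^i))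
            = (ca (Suc i) * (1 - q^(2*i+2)) + q^(2*i+1) * ca i) * y^Suc i"
        unfolding p1 using p2 by (auto simp add: algebra_simps simp del: ca.simps)
      also have "\<dots> = 0" by (simp only: ca_rec) simp
      finally show ?thesis using Suc by (simp add: g_def h_def)
    qed
  qed
  ultimately have "(\<lambda>j. ca j * y^j) sums ((1 - q*y) * E (q^2*y))" by (simp add: algebra_simps)
  then show ?thesis unfolding E_def by (simp add: sums_iff)
qed

end

lemma Ln_bound:
  fixes u :: complex assumes u: "norm u < 1"
  shows "norm (ln (1 - u)) \<le> norm u / (1 - norm u)"
proof -
  have s: "(\<lambda>n. - ((u)^n) / of_nat n) sums ln (1 - u)"
    using Ln_series'[of "-u"] u by simp
  have s2: "(\<lambda>n. - ((u)^Suc n) / of_nat (Suc n)) sums ln (1 - u)"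
    using sums_Suc_iff[of "\<lambda>n. - ((u)^n) / of_nat n"] s by simp
  have g: "(\<lambda>n. norm u * norm u ^ n) sums (norm u * (1 / (1 - norm u)))"
    by (intro sums_mult geometric_sums) (use u in simp)
  have le: "norm (- ((u)^Suc n) / of_nat (Suc n)) \<le> norm u * norm u ^ n" for n
  proof -
    have "norm (- ((u)^Suc n) / of_nat (Suc n)) = norm u ^ Suc n / real (Suc n)"
      by (simp only: norm_divide norm_minus_cancel norm_power norm_of_nat)
    also have "\<dots> \<le> norm u ^ Suc n / 1"
      by (rule divide_left_mono) auto
    also have "\<dots> = norm u ^ Suc n" by simp
    finally show ?thesis by simp
  qed
  have sm: "summable (\<lambda>n. norm u * norm u ^ n)" using g by (rule sums_summable)
  have sn: "summable (\<lambda>n. norm (- ((u)^Suc n) / of_nat (Suc n)))"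
    by (rule summable_comparison_test'[OF sm]) (use le in auto)
  have "norm (ln (1 - u)) = norm (\<Sum>n. - ((u)^Suc n) / of_nat (Suc n))" using s2 by (simp add: sums_iff)
  also have "\<dots> \<le> (\<Sum>n. norm (- ((u)^Suc n) / of_nat (Suc n)))" by (rule summable_norm[OF sn])
  also have "\<dots> \<le> (\<Sum>n. norm u * norm u ^ n)" by (rule suminf_le[OF le sn sm])
  finally have "norm (ln (1 - u)) \<le> (\<Sum>n. norm u * norm u ^ n)" .
  also have "\<dots> = norm u / (1 - norm u)" using g by (simp add: sums_iff)
  finally show ?thesis .
qed

context jt begin

lemma E_prod: "E y = (\<Prod>j<N. (1 - q^(2*j+1)*y)) * E (q^(2*N)*y)"
proof (induction N)
  case 0 then show ?case by simp
next
  case (Suc N)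
  have e1: "q^2*(q^(2*N)*y) = q^(2*Suc N)*y" by (simp add: power2_eq_square)
  have e2: "q*(q^(2*N)*y) = q^(2*N+1)*y" by simp
  have "E (q^(2*N)*y) = (1 - q^(2*N+1)*y) * E (q^(2*Suc N)*y)"
    by (metis E_fe e1 e2)
  then have "E y = (\<Prod>j<N. (1 - q^(2*j+1)*y)) * ((1 - q^(2*N+1)*y) * E (q^(2*Suc N)*y))"
    using Suc.IH by metis
  then show ?case by (simp only: prod.lessThan_Suc mult.assoc)
qed

lemma E_cont: "isCont E x"
  unfolding E_def[abs_def] by (rule isCont_powser_converges_everywhere) (rule E_summable)

lemma E_0: "E 0 = 1"
  unfolding E_def using powser_zero[of ca] by simp

lemma E_lim: "(\<lambda>N. E (q^(2*N)*y)) \<longlonglongrightarrow> 1"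
proof -
  have "(\<lambda>N. q^(2*N)*y) \<longlonglongrightarrow> 0 * y"
  proof (intro tendsto_mult tendsto_const)
    have "norm (q^2) < 1" using nq by (simp add: norm_power abs_square_less_1)
    then have "(\<lambda>N. (q^2)^N) \<longlonglongrightarrow> 0" by (intro LIMSEQ_power_zero)
    then show "(\<lambda>N. q^(2*N)) \<longlonglongrightarrow> 0" by (simp add: power_mult)
  qed
  then have l0: "(\<lambda>N. q^(2*N)*y) \<longlonglongrightarrow> 0" by simp
  have "(\<lambda>N. E (q^(2*N)*y)) \<longlonglongrightarrow> E 0"
    by (rule isCont_tendsto_compose[OF E_cont l0])
  then show ?thesis by (simp add: E_0)
qed

definition S :: "complex \<Rightarrow> complex" where "S y = (\<Sum>j. ln (1 - q^(2*j+1)*y))"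

lemma Sterm_bound:
  assumes "norm y \<le> 1" shows "norm (ln (1 - q^(2*j+1)*y)) \<le> norm q ^ (2*j+1) / (1 - norm q)"
proof -
  have a: "norm (q^(2*j+1)*y) \<le> norm q ^ (2*j+1)"
    using assms by (simp add: norm_mult norm_power mult_left_le)
  have b: "norm q ^ (2*j+1) \<le> norm q" by (rule nq_pow_le) simp
  have u: "norm (q^(2*j+1)*y) < 1" using a b nq by linarith
  have "norm (ln (1 - q^(2*j+1)*y)) \<le> norm (q^(2*j+1)*y) / (1 - norm (q^(2*j+1)*y))"
    by (rule Ln_bound[OF u])
  also have "\<dots> \<le> norm q ^ (2*j+1) / (1 - norm q)"
    using a b nq by (intro frac_le) auto
  finally show ?thesis .
qed

lemma Sbound_summable: "summable (\<lambda>j. norm q ^ (2*j+1) / (1 - norm q))"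
proof -
  have "norm (norm q ^ 2) < 1" using nq by (simp add: abs_square_less_1)
  then have "summable (\<lambda>j. norm q / (1 - norm q) * (norm q ^ 2) ^ j)"
    by (intro summable_mult summable_geometric)
  moreover have "(\<lambda>j. norm q ^ (2*j+1) / (1 - norm q)) = (\<lambda>j. norm q / (1 - norm q) * (norm q ^ 2) ^ j)"
    by (rule ext) (simp add: power_mult[symmetric] power_add mult.commute)
  ultimately show ?thesis by simp
qed

lemma S_summable: "norm y \<le> 1 \<Longrightarrow> summable (\<lambda>j. norm (ln (1 - q^(2*j+1)*y)))"
  by (rule summable_comparison_test'[OF Sbound_summable]) (use Sterm_bound in auto)

lemma E_exp_S: assumes y: "norm y \<le> 1" shows "E y = exp (S y)"
proof -
  have nz: "1 - q^(2*j+1)*y \<noteq> 0" for j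
  proof
    assume "1 - q^(2*j+1)*y = 0"
    then have "norm (q^(2*j+1)*y) = 1" by (metis eq_iff_diff_eq_0 norm_one)
    moreover have "norm (q^(2*j+1)*y) \<le> norm q ^ (2*j+1)"
      using y by (simp add: norm_mult norm_power mult_left_le)
    moreover have "norm q ^ (2*j+1) \<le> norm q" by (rule nq_pow_le) simp
    ultimately show False using nq by linarith
  qed
  have "(\<lambda>N. \<Sum>j<N. ln (1 - q^(2*j+1)*y)) \<longlonglongrightarrow> S y"
    unfolding S_def by (rule summable_LIMSEQ) (rule summable_norm_cancel[OF S_summable[OF y]])
  then have "(\<lambda>N. exp (\<Sum>j<N. ln (1 - q^(2*j+1)*y))) \<longlonglongrightarrow> exp (S y)"
    by (rule tendsto_exp)
  moreover have "exp (\<Sum>j<N. ln (1 - q^(2*j+1)*y)) = (\<Prod>j<N. (1 - q^(2*j+1)*y))" for N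
    unfolding exp_sum[OF finite_lessThan] by (intro prod.cong refl exp_Ln nz)
  ultimately have "(\<lambda>N. \<Prod>j<N. (1 - q^(2*j+1)*y)) \<longlonglongrightarrow> exp (S y)"
    by simp
  then have "(\<lambda>N. (\<Prod>j<N. (1 - q^(2*j+1)*y)) * E (q^(2*N)*y)) \<longlonglongrightarrow> exp (S y) * 1"
    by (intro tendsto_mult E_lim)
  moreover have eq: "(\<lambda>N. (\<Prod>j<N. (1 - q^(2*j+1)*y)) * E (q^(2*N)*y)) = (\<lambda>N. E y)"
    by (rule ext, rule E_prod[symmetric])
  ultimately have "(\<lambda>N. E y) \<longlonglongrightarrow> exp (S y) * 1" by (simp only: eq)
  then show ?thesis by (metis LIMSEQ_const_iff mult_1_right)
qed

lemma S_cont: "continuous_on (cball 0 1) S"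
proof -
  have u: "uniform_limit (cball 0 1) (\<lambda>N y. \<Sum>j<N. ln (1 - q^(2*j+1)*y)) S sequentially"
    unfolding S_def[abs_def]
    by (rule Weierstrass_m_test[OF _ Sbound_summable]) (use Sterm_bound in auto)
  have c: "continuous_on (cball 0 1) (\<lambda>y. ln (1 - q^(2*j+1)*y))" for j
  proof (rule continuous_on_Ln')
    show "continuous_on (cball 0 1) (\<lambda>y. 1 - q^(2*j+1)*y)" by (intro continuous_intros)
    fix y assume y: "(y::complex) \<in> cball 0 1"
    have "norm (q^(2*j+1)*y) \<le> norm q ^ (2*j+1)"
      using y by (simp add: norm_mult norm_power mult_left_le)
    moreover have "norm q ^ (2*j+1) \<le> norm q" by (rule nq_pow_le) simp
    ultimately have "norm (q^(2*j+1)*y) < 1" using nq by linarith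
    then have "Re (q^(2*j+1)*y) < 1" using complex_Re_le_cmod le_less_trans by blast
    then show "1 - q^(2*j+1)*y \<notin> \<real>\<^sub>\<le>\<^sub>0" by (auto simp: complex_nonpos_Reals_iff)
  qed
  show ?thesis
  proof (rule uniform_limit_theorem[OF _ u])
    show "\<forall>\<^sub>F N in sequentially. continuous_on (cball 0 1) (\<lambda>y. \<Sum>j<N. ln (1 - q^(2*j+1)*y))"
    proof (rule always_eventually, rule allI)
      fix N show "continuous_on (cball 0 1) (\<lambda>y. \<Sum>j<N. ln (1 - q^(2*j+1)*y))"
        by (intro continuous_on_sum) (rule c)
    qed
  qed simp
qed

end

lemma term_le_suminf: "summable (f::nat\<Rightarrow>real) \<Longrightarrow> (\<And>n. 0 \<le> f n) \<Longrightarrow> f i \<le> suminf f"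
  using sum_le_suminf[of f "{i}"] by auto

lemma exp_int_mult: "exp (of_int n * (z::complex)) = exp z powi n"
proof (cases "n \<ge> 0")
  case True
  define m where "m = nat n"
  have "n = int m" using True by (simp add: m_def)
  then show ?thesis by (simp add: exp_of_nat_mult)
next
  case False
  define m where "m = nat (-n)"
  have m: "n = - int m" using False by (simp add: m_def)
  have "exp (of_int n * z) = inverse (exp (of_nat m * z))" using m by (simp add: exp_minus[symmetric])
  then show ?thesis using m by (simp add: exp_of_nat_mult power_int_minus)
qed

definition xt :: "real \<Rightarrow> complex" where "xt t = exp (2 * \<i> * of_real t)"

lemma xt_norm [simp]: "norm (xt t) = 1"
  unfolding xt_def by (simp add: norm_exp_eq_Re)

lemma xt_nz [simp]: "xt t \<noteq> 0" unfolding xt_def by simp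

lemma xt_cont: "continuous_on A xt" unfolding xt_def by (intro continuous_intros)

lemma xt_powi: "xt t powi p = exp (t *\<^sub>R (2 * \<i> * of_int p))"
  unfolding xt_def exp_int_mult[symmetric] by (simp add: scaleR_conv_of_real algebra_simps)

lemma int_xt_pow: "((\<lambda>t. xt t powi p) has_integral (if p = 0 then of_real pi else 0)) {0..pi}"
proof (cases "p = 0")
  case True
  then show ?thesis using has_integral_const_real[of "1::complex" 0 pi] by (simp add: scaleR_conv_of_real)
next
  case False
  define A where "A = 2 * \<i> * (of_int p :: complex)"
  have A: "A \<noteq> 0" using False by (simp add: A_def)
  have d: "((\<lambda>t. exp (t *\<^sub>R A) / A) has_vector_derivative exp (t *\<^sub>R A)) (at t within {0..pi})" for t
    using has_vector_derivative_divide[OF exp_scaleR_has_vector_derivative_right[of A t "{0..pi}"], of A] A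
    by simp
  have i1: "((\<lambda>t. exp (t *\<^sub>R A)) has_integral (exp (pi *\<^sub>R A) / A - exp (0 *\<^sub>R A) / A)) {0..pi}"
    by (rule fundamental_theorem_of_calculus[OF _ d]) simp
  have e1: "exp (pi *\<^sub>R A) = 1"
  proof -
    have "exp (pi *\<^sub>R A) = exp (of_int p * (2 * of_real pi * \<i>))"
      by (simp add: A_def scaleR_conv_of_real algebra_simps)
    also have "\<dots> = exp (2 * of_real pi * \<i>) powi p" by (rule exp_int_mult)
    also have "\<dots> = 1" by simp
    finally show ?thesis .
  qed
  have v: "exp (pi *\<^sub>R A) / A - exp (0 *\<^sub>R A) / A = 0" unfolding e1 by simp
  have eqf: "(\<lambda>t. xt t powi p) = (\<lambda>t. exp (t *\<^sub>R A))" unfolding xt_powi A_def by (rule refl)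
  have r: "(if p = 0 then complex_of_real pi else 0) = 0" using False by simp
  show ?thesis unfolding eqf r using i1 unfolding v .
qed


lemma series_has_integral:
  fixes f :: "nat \<Rightarrow> real \<Rightarrow> complex"
  assumes c: "\<And>n. continuous_on {a..b} (f n)"
    and bd: "\<And>n t. t \<in> {a..b} \<Longrightarrow> norm (f n t) \<le> M n" and M: "summable M"
    and I: "\<And>n. (f n has_integral I n) {a..b}"
  shows "I sums integral {a..b} (\<lambda>t. \<Sum>n. f n t)"
    and "((\<lambda>t. \<Sum>n. f n t) has_integral (\<Sum>n. I n)) {a..b}"
proof -
  have u: "uniform_limit {a..b} (\<lambda>N t. \<Sum>i<N. f i t) (\<lambda>t. \<Sum>n. f n t) sequentially"
    by (rule Weierstrass_m_test[OF bd M])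
  have cs: "continuous_on {a..b} (\<lambda>t. \<Sum>i<N. f i t)" for N
    by (intro continuous_on_sum c)
  obtain I' J where h1: "\<And>N. ((\<lambda>t. \<Sum>i<N. f i t) has_integral I' N) {a..b}"
    and h2: "((\<lambda>t. \<Sum>n. f n t) has_integral J) {a..b}" and h3: "I' \<longlonglongrightarrow> J"
    using uniform_limit_integral[OF u cs] by auto
  have "((\<lambda>t. \<Sum>i<N. f i t) has_integral (\<Sum>i<N. I i)) {a..b}" for N
    by (rule has_integral_sum) (auto intro: I)
  then have "I' N = (\<Sum>i<N. I i)" for N using h1 has_integral_unique by blast
  then have "I' = (\<lambda>N. \<Sum>i<N. I i)" by (rule ext)
  then have s: "I sums J" using h3 unfolding sums_def by simp
  have "J = integral {a..b} (\<lambda>t. \<Sum>n. f n t)" using h2 by (simp add: integral_unique)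
  then show "I sums integral {a..b} (\<lambda>t. \<Sum>n. f n t)" using s by simp
  show "((\<lambda>t. \<Sum>n. f n t) has_integral (\<Sum>n. I n)) {a..b}" using h2 s by (simp add: sums_iff)
qed

context jt begin

definition G :: "complex \<Rightarrow> complex" where "G y = E y * E (inverse y)"

lemma G_fe: assumes y: "y \<noteq> 0" shows "G y = - (q*y) * G (q^2*y)"
proof -
  have a: "E y = (1 - q*y) * E (q^2*y)" by (rule E_fe)
  have i1: "q * inverse (q^2*y) = inverse (q*y)" using q0 y by (simp add: field_simps power2_eq_square)
  have i2: "q^2 * inverse (q^2*y) = inverse y" using q0 y by (simp add: field_simps power2_eq_square)
  have b: "E (inverse (q^2*y)) = (1 - inverse (q*y)) * E (inverse y)"
    using E_fe[of "inverse (q^2*y)"] unfolding i1 i2 .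
  have c: "- (q*y) * (1 - inverse (q*y)) = 1 - q*y" using q0 y by (simp add: field_simps)
  have "- (q*y) * G (q^2*y) = (- (q*y) * (1 - inverse (q*y))) * E (q^2*y) * E (inverse y)"
    unfolding G_def b by (simp only: mult_ac)
  also have "\<dots> = E y * E (inverse y)" unfolding c a by (simp only: mult_ac)
  finally show ?thesis unfolding G_def by simp
qed

lemma ca_norm_summable: "summable (\<lambda>j. norm (ca j))"
  using ca_summable[of 1] by simp

definition C1 :: real where "C1 = (\<Sum>j. norm (ca j))"

lemma ca_le: "norm (ca j) \<le> C1"
  unfolding C1_def by (rule term_le_suminf[OF ca_norm_summable]) simp

definition cterm :: "int \<Rightarrow> nat \<Rightarrow> complex" where
  "cterm m k = (if 0 \<le> m + int k then ca (nat (m + int k)) * ca k else 0)"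

definition cc :: "int \<Rightarrow> complex" where "cc m = (\<Sum>\<^sub>\<infinity>k::nat. cterm m k)"

lemma cc_summ: "summable (\<lambda>k. norm (cterm m k))"
proof (rule summable_comparison_test'[where g="\<lambda>k. C1 * norm (ca k)"])
  show "summable (\<lambda>k. C1 * norm (ca k))" by (intro summable_mult ca_norm_summable)
  fix k show "norm (norm (cterm m k)) \<le> C1 * norm (ca k)"
    unfolding cterm_def using ca_le[of "nat (m + int k)"]
    by (auto simp: norm_mult intro: mult_right_mono)
qed

lemma cc_sums: "(\<lambda>k. cterm m k) sums cc m"
proof -
  have s: "(\<lambda>k. cterm m k) sums (\<Sum>k. cterm m k)"
    by (rule summable_sums[OF summable_norm_cancel[OF cc_summ]])
  have "((\<lambda>k. cterm m k) has_sum (\<Sum>k. cterm m k)) UNIV"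
    by (rule norm_summable_imp_has_sum[OF cc_summ s])
  then have "cc m = (\<Sum>k. cterm m k)" unfolding cc_def by (rule infsumI)
  then show ?thesis using s by simp
qed

lemma cc_has_sum: "((\<lambda>k. cterm m k) has_sum cc m) UNIV"
  by (rule norm_summable_imp_has_sum[OF cc_summ cc_sums])

lemma E_cont_on: "continuous_on A E"
  by (simp add: continuous_at_imp_continuous_on E_cont)

lemma E_comp_cont: "continuous_on A g \<Longrightarrow> continuous_on A (\<lambda>t. E (g t))"
  by (rule continuous_on_compose2[OF E_cont_on]) auto

lemma E_norm_le: "norm (E y) \<le> (\<Sum>j. norm (ca j * y^j))"
  unfolding E_def by (rule summable_norm[OF ca_summable])

end

context jt begin

lemma coef_int:
  assumes \<rho>: "\<rho> \<noteq> 0"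
  shows "((\<lambda>t. G (\<rho> * xt t) * xt t powi (-m)) has_integral (of_real pi * \<rho> powi m * cc m)) {0..pi}"
proof -
  define f where "f k t = ca k * inverse (\<rho> * xt t) ^ k * (xt t powi (-m) * E (\<rho> * xt t))" for k t
  define B where "B = (\<Sum>j. norm (ca j * \<rho>^j))"
  have EB: "norm (E (\<rho> * xt t)) \<le> B" for t
    using E_norm_le[of "\<rho> * xt t"] by (simp add: B_def norm_mult norm_power power_mult_distrib)
  have sumf: "G (\<rho> * xt t) * xt t powi (-m) = (\<Sum>k. f k t)" for t
  proof -
    have "G (\<rho> * xt t) * xt t powi (-m) = (\<Sum>k. ca k * inverse (\<rho> * xt t) ^ k) * (xt t powi (-m) * E (\<rho> * xt t))"
      unfolding G_def E_def[of "inverse _"] by (simp only: mult_ac)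
    also have "\<dots> = (\<Sum>k. f k t)" unfolding f_def by (rule suminf_mult2[OF E_summable])
    finally show ?thesis .
  qed
  have fcont: "continuous_on {0..pi} (f k)" for k
    unfolding f_def using \<rho>
    by (intro continuous_intros E_comp_cont xt_cont continuous_on_power_int) auto
  have fbd: "norm (f k t) \<le> norm (ca k * inverse \<rho> ^ k) * B" for k t
  proof -
    have "norm (f k t) = norm (ca k * inverse \<rho> ^ k) * norm (E (\<rho> * xt t))"
      unfolding f_def by (simp add: norm_mult norm_power norm_power_int norm_inverse power_mult_distrib)
    also have "\<dots> \<le> norm (ca k * inverse \<rho> ^ k) * B" by (intro mult_left_mono EB) simp
    finally show ?thesis .
  qed
  have fsum: "summable (\<lambda>k. norm (ca k * inverse \<rho> ^ k) * B)"
    by (intro summable_mult2 ca_summable)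
  have fint: "(f k has_integral (of_real pi * \<rho> powi m * cterm m k)) {0..pi}" for k
  proof -
    define c where "c j = ca k * inverse \<rho> ^ k * (ca j * \<rho> ^ j)" for j
    define h where "h j t = c j * xt t powi (int j - int k - m)" for j t
    have hsum: "f k t = (\<Sum>j. h j t)" for t
    proof -
      have "f k t = ca k * inverse (\<rho> * xt t) ^ k * xt t powi (-m) * (\<Sum>j. ca j * (\<rho> * xt t)^j)"
        unfolding f_def E_def by (simp only: mult_ac)
      also have "\<dots> = (\<Sum>j. ca k * inverse (\<rho> * xt t) ^ k * xt t powi (-m) * (ca j * (\<rho> * xt t)^j))"
        by (rule suminf_mult[OF E_summable, symmetric])
      also have "\<dots> = (\<Sum>j. h j t)"
      proof (rule suminf_cong)
        fix j
        have "inverse (\<rho> * xt t) ^ k * xt t powi (-m) * (\<rho> * xt t)^j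
              = inverse \<rho> ^ k * \<rho> ^ j * (xt t powi (- int k) * xt t powi (-m) * xt t powi (int j))"
          by (simp add: power_mult_distrib power_int_minus power_inverse mult_ac)
        also have "xt t powi (- int k) * xt t powi (-m) * xt t powi (int j) = xt t powi (int j - int k - m)"
        proof -
          have e: "int j - int k - m = (- int k + - m) + int j" by simp
          show ?thesis unfolding e by (simp only: power_int_add[OF disjI1[OF xt_nz]])
        qed
        finally show "ca k * inverse (\<rho> * xt t) ^ k * xt t powi (-m) * (ca j * (\<rho> * xt t)^j) = h j t"
          unfolding h_def c_def by (simp add: mult_ac)
      qed
      finally show ?thesis .
    qed
    have hcont: "continuous_on {0..pi} (h j)" for j
      unfolding h_def by (intro continuous_intros xt_cont continuous_on_power_int) auto
    have hbd: "norm (h j t) \<le> norm (c j)" for j t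
      unfolding h_def by (simp add: norm_mult norm_power_int)
    have hsm: "summable (\<lambda>j. norm (c j))"
      unfolding c_def norm_mult[of "ca k * _"] by (intro summable_mult ca_summable)
    have hint: "(h j has_integral (c j * (if int j - int k - m = 0 then of_real pi else 0))) {0..pi}" for j
      unfolding h_def by (intro has_integral_mult_right int_xt_pow)
    have S1: "(\<lambda>j. c j * (if int j - int k - m = 0 then of_real pi else 0)) sums integral {0..pi} (\<lambda>t. \<Sum>j. h j t)"
      and S2: "((\<lambda>t. \<Sum>j. h j t) has_integral (\<Sum>j. c j * (if int j - int k - m = 0 then of_real pi else 0))) {0..pi}"
      using series_has_integral[OF hcont hbd hsm hint] by auto
    have val: "(\<lambda>j. c j * (if int j - int k - m = 0 then of_real pi else 0)) sums (of_real pi * \<rho> powi m * cterm m k)"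
    proof (cases "0 \<le> m + int k")
      case True
      define i where "i = nat (m + int k)"
      have eq: "(\<lambda>j. c j * (if int j - int k - m = 0 then of_real pi else 0)) = (\<lambda>j. if j = i then c i * of_real pi else 0)"
        using True by (auto simp: i_def fun_eq_iff)
      have "c i * of_real pi = of_real pi * \<rho> powi m * cterm m k"
      proof -
        have "inverse \<rho> ^ k * \<rho> ^ i = \<rho> powi (int i - int k)"
          using \<rho> by (simp add: power_int_diff power_inverse field_simps)
        also have "int i - int k = m" using True by (simp add: i_def)
        finally have "inverse \<rho> ^ k * \<rho> ^ i = \<rho> powi m" .
        then show ?thesis using True unfolding c_def cterm_def i_def[symmetric]
          by (simp add: mult_ac)
      qed
      then show ?thesis unfolding eq using sums_single[of i "\<lambda>_. c i * of_real pi"] by (simp add: mult_ac)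
    next
      case False
      have eq: "(\<lambda>j. c j * (if int j - int k - m = 0 then of_real pi else 0)) = (\<lambda>j. 0)"
        using False by (auto simp: fun_eq_iff)
      show ?thesis unfolding eq using False by (simp add: cterm_def)
    qed
    have "((\<lambda>t. \<Sum>j. h j t) has_integral (of_real pi * \<rho> powi m * cterm m k)) {0..pi}"
      using S2 val by (simp add: sums_iff)
    moreover have "(\<lambda>t. \<Sum>j. h j t) = f k" using hsum by (simp add: fun_eq_iff)
    ultimately show ?thesis by simp
  qed
  have "((\<lambda>t. \<Sum>k. f k t) has_integral (\<Sum>k. of_real pi * \<rho> powi m * cterm m k)) {0..pi}"
    using series_has_integral(2)[OF fcont fbd fsum fint] .
  moreover have "(\<Sum>k. of_real pi * \<rho> powi m * cterm m k) = of_real pi * \<rho> powi m * cc m"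
    using sums_mult[OF cc_sums, of "of_real pi * \<rho> powi m"] by (simp add: sums_iff)
  moreover have "(\<lambda>t. \<Sum>k. f k t) = (\<lambda>t. G (\<rho> * xt t) * xt t powi (-m))" using sumf by (simp add: fun_eq_iff)
  ultimately show ?thesis by simp
qed

end

context jt begin

lemma cc_rec: "cc m = - (q * (q^2) powi (m-1)) * cc (m - 1)"
proof -
  have i1: "((\<lambda>t. G (xt t) * xt t powi (-m)) has_integral (of_real pi * cc m)) {0..pi}"
    using coef_int[of 1 m] by simp
  have i2: "((\<lambda>t. G (q^2 * xt t) * xt t powi (-(m-1))) has_integral (of_real pi * (q^2) powi (m-1) * cc (m-1))) {0..pi}"
    using coef_int[of "q^2" "m-1"] q0 by simp
  have i3: "((\<lambda>t. - q * (G (q^2 * xt t) * xt t powi (-(m-1)))) has_integral (- q * (of_real pi * (q^2) powi (m-1) * cc (m-1)))) {0..pi}"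
    by (rule has_integral_mult_right[OF i2])
  have eq: "- q * (G (q^2 * xt t) * xt t powi (-(m-1))) = G (xt t) * xt t powi (-m)" for t
  proof -
    have "xt t * xt t powi (-m) = xt t powi (-(m-1))"
    proof -
      have "xt t powi (-(m-1)) = xt t powi (-m + 1)" by simp
      also have "\<dots> = xt t * xt t powi (-m)" by (rule power_int_add_1') simp
      finally show ?thesis by simp
    qed
    then show ?thesis using G_fe[of "xt t"] by (simp add: mult_ac)
  qed
  have "((\<lambda>t. G (xt t) * xt t powi (-m)) has_integral (- q * (of_real pi * (q^2) powi (m-1) * cc (m-1)))) {0..pi}"
    using i3 unfolding eq .
  then have "of_real pi * cc m = - q * (of_real pi * (q^2) powi (m-1) * cc (m-1))"
    using i1 has_integral_unique by blast
  then have "of_real pi * (cc m - (- (q * (q^2) powi (m-1)) * cc (m - 1))) = 0"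
    by (simp add: algebra_simps)
  then have "cc m + q * (q^2) powi (m - 1) * cc (m - 1) = 0" by simp
  then show ?thesis by (simp add: eq_neg_iff_add_eq_0)
qed

lemma K_alg: "- (q * (q^2) powi n) * ((-1) powi n * q powi (n^2)) = (-1) powi (n+1) * q powi ((n+1)^2)"
proof -
  have a: "(q^2) powi n = q powi (2*n)" by (simp add: power_int_mult)
  have b: "(n+1)^2 = (n^2 + 2*n) + 1" by (simp add: power2_eq_square algebra_simps)
  have c: "q powi ((n^2 + 2*n) + 1) = q powi (n^2) * q powi (2*n) * q"
    using q0 by (simp add: power_int_add)
  have d: "(-1::complex) powi (n+1) = (-1) powi n * (-1)" by (rule power_int_add_1) simp
  show ?thesis unfolding a b c d by (simp add: mult_ac)
qed

lemma cc_formula: "cc m = (-1) powi m * q powi (m^2) * cc 0"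
proof (induction m rule: int_induct[where k=0])
  case base then show ?case by simp
next
  case (step1 i)
  have "cc (i+1) = - (q * (q^2) powi i) * cc i" using cc_rec[of "i+1"] by simp
  also have "\<dots> = (- (q * (q^2) powi i) * ((-1) powi i * q powi (i^2))) * cc 0" using step1 by (simp add: mult_ac)
  also have "\<dots> = (-1) powi (i+1) * q powi ((i+1)^2) * cc 0" by (simp only: K_alg)
  finally show ?case .
next
  case (step2 i)
  have nz: "- (q * (q^2) powi (i-1)) \<noteq> 0" using q0 by simp
  have "- (q * (q^2) powi (i-1)) * cc (i-1) = cc i" using cc_rec[of i] by simp
  also have "\<dots> = (-1) powi i * q powi (i^2) * cc 0" by (rule step2)
  also have "\<dots> = - (q * (q^2) powi (i-1)) * ((-1) powi (i-1) * q powi ((i-1)^2) * cc 0)"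
    using K_alg[of "i-1"] by (simp add: mult_ac)
  finally show ?case using nz by simp
qed

end

context jt begin

lemma laurent:
  assumes y: "y \<noteq> 0"
  shows "((\<lambda>n. cc n * y powi n) has_sum G y) UNIV"
proof -
  define T where "T = (\<lambda>(k::nat, j::nat). ca k * inverse y ^ k * (ca j * y ^ j))"
  have nT: "norm (T (k, j)) = norm (ca k * inverse y ^ k) * norm (ca j * y ^ j)" for k j
    unfolding T_def by (simp add: norm_mult)
  have inner_has: "((\<lambda>j. T (k, j)) has_sum (ca k * inverse y ^ k * E y)) UNIV" for k
  proof (rule norm_summable_imp_has_sum)
    show "summable (\<lambda>j. norm (T (k, j)))" unfolding nT by (intro summable_mult ca_summable)
    show "(\<lambda>j. T (k, j)) sums (ca k * inverse y ^ k * E y)"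
      unfolding T_def E_def by (simp add: sums_mult summable_sums E_summable)
  qed
  have outer_has: "((\<lambda>k. ca k * inverse y ^ k * E y) has_sum (G y)) UNIV"
  proof (rule norm_summable_imp_has_sum)
    show "summable (\<lambda>k. norm (ca k * inverse y ^ k * E y))"
      by (simp only: norm_mult[of _ "E y"]) (intro summable_mult2 ca_summable)
    show "(\<lambda>k. ca k * inverse y ^ k * E y) sums G y"
      unfolding G_def E_def[of "inverse y"] by (subst mult.commute) (intro sums_mult2 summable_sums E_summable)
  qed
  have summ: "T summable_on UNIV \<times> UNIV"
  proof (rule abs_summable_summable)
    define A where "A = (\<Sum>j. norm (ca j * y^j))"
    have a1: "(\<lambda>j. norm (T (k, j))) summable_on UNIV" for k
      by (rule norm_summable_imp_summable_on) (simp add: nT summable_mult ca_summable)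
    have a2: "infsum (\<lambda>j. norm (T (k, j))) UNIV = norm (ca k * inverse y ^ k) * A" for k
    proof -
      have "(\<lambda>j. norm (T (k, j))) sums (norm (ca k * inverse y ^ k) * A)"
        unfolding nT A_def by (intro sums_mult summable_sums ca_summable)
      then have "((\<lambda>j. norm (T (k, j))) has_sum (norm (ca k * inverse y ^ k) * A)) UNIV"
        by (intro norm_summable_imp_has_sum) (auto simp: nT intro!: summable_mult ca_summable)
      then show ?thesis by (rule infsumI)
    qed
    have a3: "(\<lambda>k. norm (infsum (\<lambda>j. norm (T (k, j))) UNIV)) summable_on UNIV"
    proof -
      have A0: "0 \<le> A" unfolding A_def by (intro suminf_nonneg ca_summable) simp
      show ?thesis unfolding a2 by (rule norm_summable_imp_summable_on) (simp add: abs_mult A0 summable_mult2 ca_summable)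
    qed
    show "(\<lambda>x. norm (T x)) summable_on UNIV \<times> UNIV"
      using Infinite_Sum.abs_summable_on_Sigma_iff[where f=T and A=UNIV and B="\<lambda>_. UNIV"] a1 a3 by auto
  qed
  have hT: "(T has_sum G y) (UNIV \<times> UNIV)"
    by (rule has_sum_SigmaI[OF inner_has outer_has summ])
  define W where "W = (\<lambda>(n::int, k::nat). cterm n k * y powi n)"
  define D where "D = {(n::int, k::nat). 0 \<le> n + int k}"
  have hW: "(W has_sum G y) D"
  proof -
    have "(T has_sum G y) (UNIV \<times> UNIV) = (W has_sum G y) D"
    proof (rule has_sum_reindex_bij_witness[where j="\<lambda>(k,j). (int j - int k, k)" and i="\<lambda>(n,k). (k, nat (n + int k))"])
      fix a :: "nat \<times> nat" assume "a \<in> UNIV \<times> UNIV"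
      obtain k j where a: "a = (k, j)" by (cases a)
      show "(case case a of (k, j) \<Rightarrow> (int j - int k, k) of (n, k) \<Rightarrow> (k, nat (n + int k))) = a"
        using a by simp
      show "(case a of (k, j) \<Rightarrow> (int j - int k, k)) \<in> D" using a by (simp add: D_def)
      have "y powi (int j - int k) = y ^ j * inverse y ^ k"
        using y by (simp add: power_int_diff field_simps)
      then show "W (case a of (k, j) \<Rightarrow> (int j - int k, k)) = T a"
        using a by (simp add: W_def T_def cterm_def mult_ac)
    next
      fix b :: "int \<times> nat" assume b: "b \<in> D"
      obtain n k where bb: "b = (n, k)" by (cases b)
      show "(case case b of (n, k) \<Rightarrow> (k, nat (n + int k)) of (k, j) \<Rightarrow> (int j - int k, k)) = b"
        using b bb by (simp add: D_def)
      show "(case b of (n, k) \<Rightarrow> (k, nat (n + int k))) \<in> UNIV \<times> UNIV" by simp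
    qed simp
    then show ?thesis using hT by simp
  qed
  have hW': "(W has_sum G y) (UNIV \<times> UNIV)"
  proof -
    have "(W has_sum G y) D = (W has_sum G y) (UNIV \<times> UNIV)"
      by (rule has_sum_cong_neutral) (auto simp: D_def W_def cterm_def)
    then show ?thesis using hW by simp
  qed
  have slice: "((\<lambda>k. W (n, k)) has_sum (cc n * y powi n)) UNIV" for n
    unfolding W_def using has_sum_cmult_left[OF cc_has_sum[of n], of "y powi n"] by simp
  show ?thesis by (rule has_sum_Sigma'[OF hW' slice])
qed

lemma xt_minus: "inverse (xt t) = xt (-t)"
  unfolding xt_def by (simp add: exp_minus[symmetric])

lemma G_circle: "G (xt t) = exp (S (xt t) + S (xt (-t)))"
  unfolding G_def xt_minus using E_exp_S[of "xt t"] E_exp_S[of "xt (-t)"] by (simp add: exp_add)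

lemma G1_nz: "G 1 \<noteq> 0"
  using G_circle[of 0] by (simp add: xt_def)

lemma cc0_nz: "cc 0 \<noteq> 0"
proof
  assume c0: "cc 0 = 0"
  have "((\<lambda>n. cc n * 1 powi n) has_sum G 1) UNIV" by (rule laurent) simp
  moreover have "cc n * 1 powi n = 0" for n using c0 cc_formula[of n] by simp
  then have "(\<lambda>n. cc n * 1 powi n) = (\<lambda>n. 0)" by (simp only: fun_eq_iff) simp
  ultimately have "((\<lambda>n::int. 0::complex) has_sum G 1) UNIV" by simp
  moreover have "((\<lambda>n::int. 0::complex) has_sum 0) UNIV" by (rule has_sum_0) simp
  ultimately have "G 1 = 0" by (rule has_sum_unique)
  then show False using G1_nz by simp
qed

lemma theta_circle:
  "((\<lambda>n. (-1) powi n * q powi (n^2) * xt t powi n) has_sum (G (xt t) / cc 0)) UNIV"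
proof -
  have l: "((\<lambda>n. cc n * xt t powi n) has_sum G (xt t)) UNIV" by (rule laurent) simp
  have "cc n * xt t powi n = cc 0 * ((-1) powi n * q powi (n^2) * xt t powi n)" for n
    by (subst cc_formula[of n]) (simp only: mult.assoc mult.commute mult.left_commute)
  then have e: "(\<lambda>n. cc n * xt t powi n) = (\<lambda>n. cc 0 * ((-1) powi n * q powi (n^2) * xt t powi n))"
    by (rule ext)
  from l have "((\<lambda>n. cc 0 * ((-1) powi n * q powi (n^2) * xt t powi n)) has_sum G (xt t)) UNIV"
    unfolding e .
  then show ?thesis unfolding has_sum_cmult_right_iff[OF cc0_nz] .
qed

end

lemma cos_xt: "(of_real (cos (2 * real_of_int p * t)) :: complex) = (xt t powi p + xt t powi (-p)) / 2"
proof -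
  have "(of_real (cos (2 * real_of_int p * t)) :: complex) = cos (of_real (2 * real_of_int p * t))"
    by (simp only: cos_of_real)
  also have "\<dots> = (exp (\<i> * of_real (2 * real_of_int p * t)) + exp (- (\<i> * of_real (2 * real_of_int p * t)))) / 2"
    by (rule cos_exp_eq)
  also have "exp (\<i> * of_real (2 * real_of_int p * t)) = xt t powi p"
    unfolding xt_powi by (simp add: scaleR_conv_of_real mult_ac)
  also have "exp (- (\<i> * of_real (2 * real_of_int p * t))) = xt t powi (-p)"
    unfolding xt_powi by (simp add: scaleR_conv_of_real mult_ac)
  finally show ?thesis .
qed

lemma cos_xt_nat: "(of_real (cos (2 * real n * t)) :: complex) = (xt t powi int n + xt t powi (- int n)) / 2"
  using cos_xt[of "int n" t] by simp

lemma cos_int1: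
  assumes "n \<noteq> 0"
  shows "((\<lambda>t. of_real (cos (2 * real n * t)) :: complex) has_integral 0) {0..pi}"
proof -
  have "((\<lambda>t. (xt t powi int n + xt t powi (- int n)) / 2) has_integral ((0 + 0) / 2)) {0..pi}"
    using int_xt_pow[of "int n"] int_xt_pow[of "- int n"] assms
    by (intro has_integral_divide has_integral_add) auto
  then show ?thesis unfolding cos_xt_nat by simp
qed

lemma cos_int2:
  assumes "n \<noteq> 0"
  shows "((\<lambda>t. of_real (cos (2 * real n * t)) * of_real (cos (2 * real k * t)) :: complex) has_integral
           (if k = n then of_real pi / 2 else 0)) {0..pi}"
proof -
  have eq: "(of_real (cos (2 * real n * t)) * of_real (cos (2 * real k * t)) :: complex)
     = (xt t powi (int n + int k) + xt t powi (int n - int k) + xt t powi (int k - int n) + xt t powi (- int n - int k)) / 4" for t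
  proof -
    have x: "xt t \<noteq> 0" by simp
    have "(of_real (cos (2 * real n * t)) * of_real (cos (2 * real k * t)) :: complex)
      = (xt t powi int n * xt t powi int k + xt t powi int n * xt t powi (- int k)
         + xt t powi (- int n) * xt t powi int k + xt t powi (- int n) * xt t powi (- int k)) / 4"
      unfolding cos_xt_nat by (simp add: field_simps)
    also have "\<dots> = (xt t powi (int n + int k) + xt t powi (int n + - int k) + xt t powi (- int n + int k) + xt t powi (- int n + - int k)) / 4"
      by (simp only: power_int_add[OF disjI1[OF x]])
    finally have r: "(of_real (cos (2 * real n * t)) * of_real (cos (2 * real k * t)) :: complex)
      = (xt t powi (int n + int k) + xt t powi (int n + - int k) + xt t powi (- int n + int k) + xt t powi (- int n + - int k)) / 4" .
    have e: "int n + - int k = int n - int k" "- int n + int k = int k - int n" "- int n + - int k = - int n - int k"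
      by simp_all
    show ?thesis using r unfolding e .
  qed
  define v where "v p = (if p = 0 then complex_of_real pi else 0)" for p :: int
  have "((\<lambda>t. (xt t powi (int n + int k) + xt t powi (int n - int k) + xt t powi (int k - int n) + xt t powi (- int n - int k)) / 4)
        has_integral ((v (int n + int k) + v (int n - int k) + v (int k - int n) + v (- int n - int k)) / 4)) {0..pi}"
    unfolding v_def by (intro has_integral_divide has_integral_add int_xt_pow)
  moreover have "(v (int n + int k) + v (int n - int k) + v (int k - int n) + v (- int n - int k)) / 4
        = (if k = n then of_real pi / 2 else 0)"
    using assms by (auto simp: v_def)
  ultimately show ?thesis unfolding eq by simp
qed

lemma xt_pow_sum: "xt t ^ n + xt (-t) ^ n = 2 * of_real (cos (2 * real n * t))"
proof -
  have "xt (-t) = inverse (xt t)" unfolding xt_def by (simp add: exp_minus[symmetric])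
  then have "xt (-t) ^ n = xt t powi (- int n)" by (simp add: power_int_minus power_inverse)
  moreover have "xt t ^ n = xt t powi (int n)" by simp
  ultimately show ?thesis unfolding cos_xt_nat by simp
qed

lemma xt_0 [simp]: "xt 0 = 1" by (simp add: xt_def)

lemma lnser: "norm (w::complex) < 1 \<Longrightarrow> (\<lambda>n. - (w^n) / of_nat n) sums ln (1 - w)"
  using Ln_series'[of "-w"] by simp

context jt begin

lemma Sterm_cont: "continuous_on (cball 0 1) (\<lambda>y. ln (1 - q^(2*j+1)*y))"
proof (rule continuous_on_Ln')
  show "continuous_on (cball 0 1) (\<lambda>y. 1 - q^(2*j+1)*y)" by (intro continuous_intros)
  fix y assume y: "(y::complex) \<in> cball 0 1"
  have "norm (q^(2*j+1)*y) \<le> norm q ^ (2*j+1)"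
    using y by (simp add: norm_mult norm_power mult_left_le)
  moreover have "norm q ^ (2*j+1) \<le> norm q" by (rule nq_pow_le) simp
  ultimately have "norm (q^(2*j+1)*y) < 1" using nq by linarith
  then have "Re (q^(2*j+1)*y) < 1" using complex_Re_le_cmod le_less_trans by blast
  then show "1 - q^(2*j+1)*y \<notin> \<real>\<^sub>\<le>\<^sub>0" by (auto simp: complex_nonpos_Reals_iff)
qed

lemma xt_cball [simp]: "xt t \<in> cball 0 1" by simp

definition fj :: "nat \<Rightarrow> real \<Rightarrow> complex" where
  "fj j t = ln (1 - q^(2*j+1) * xt t) + ln (1 - q^(2*j+1) * xt (-t)) - 2 * ln (1 - q^(2*j+1) * xt 0)"

definition F :: "real \<Rightarrow> complex" where
  "F t = S (xt t) + S (xt (-t)) - 2 * S (xt 0)"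

lemma F_sum: "F t = (\<Sum>j. fj j t)"
proof -
  have s: "summable (\<lambda>j. ln (1 - q^(2*j+1) * xt s))" for s
    by (rule summable_norm_cancel[OF S_summable]) simp
  have "(\<lambda>j. fj j t) sums F t"
    unfolding fj_def F_def S_def
    by (intro sums_diff sums_add sums_mult summable_sums s)
  then show ?thesis by (simp add: sums_iff)
qed

lemma fj_cont: "continuous_on A (fj j)"
proof -
  have c: "continuous_on A (\<lambda>t. ln (1 - q^(2*j+1) * xt (g t)))" if "continuous_on A g" for g
    by (rule continuous_on_compose2[OF Sterm_cont, of _ "\<lambda>t. xt (g t)"])
       (auto intro: continuous_on_compose2[OF xt_cont that])
  show ?thesis unfolding fj_def
    by (intro continuous_intros c) 
qed

lemma fj_bound: "norm (fj j t) \<le> 4 * (norm q ^ (2*j+1) / (1 - norm q))"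
proof -
  have "norm (fj j t) \<le> norm (ln (1 - q^(2*j+1) * xt t)) + norm (ln (1 - q^(2*j+1) * xt (-t))) + 2 * norm (ln (1 - q^(2*j+1) * xt 0))"
    unfolding fj_def by (rule order_trans[OF norm_triangle_ineq4]) (auto intro!: add_mono norm_triangle_le simp: norm_mult)
  also have "\<dots> \<le> 4 * (norm q ^ (2*j+1) / (1 - norm q))"
    using Sterm_bound[of "xt t" j] Sterm_bound[of "xt (-t)" j] Sterm_bound[of "xt 0" j] by simp
  finally show ?thesis .
qed

definition gk :: "nat \<Rightarrow> nat \<Rightarrow> real \<Rightarrow> complex" where
  "gk j k t = 2 * (q^(2*j+1))^k / of_nat k * (1 - of_real (cos (2 * real k * t)))"

lemma u_lt1: "norm (q^(2*j+1)) < 1"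
proof -
  have "norm (q^(2*j+1)) = norm q ^ (2*j+1)" by (rule norm_power)
  also have "\<dots> \<le> norm q" by (rule nq_pow_le) simp
  finally show ?thesis using nq by linarith
qed

lemma fj_sums: "(\<lambda>k. gk j k t) sums fj j t"
proof -
  define u where "u = q^(2*j+1)"
  have u: "norm u < 1" unfolding u_def by (rule u_lt1)
  have n1: "norm (u * xt s) < 1" for s using u by (simp add: norm_mult)
  have "(\<lambda>k. - ((u * xt t)^k) / of_nat k + - ((u * xt (-t))^k) / of_nat k - 2 * (- ((u * xt 0)^k) / of_nat k))
        sums fj j t"
    unfolding fj_def u_def[symmetric] by (intro sums_diff sums_add sums_mult lnser n1)
  moreover have "- ((u * xt t)^k) / of_nat k + - ((u * xt (-t))^k) / of_nat k - 2 * (- ((u * xt 0)^k) / of_nat k)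
     = gk j k t" for k
  proof -
    have "- ((u * xt t)^k) / of_nat k + - ((u * xt (-t))^k) / of_nat k - 2 * (- ((u * xt 0)^k) / of_nat k)
       = u^k / of_nat k * (2 - (xt t ^ k + xt (-t) ^ k))"
      by (cases "k = 0") (simp_all add: power_mult_distrib field_simps)
    also have "\<dots> = gk j k t" unfolding gk_def u_def[symmetric] xt_pow_sum by (simp add: field_simps)
    finally show ?thesis .
  qed
  ultimately show ?thesis by simp
qed

lemma gk_bound: "norm (gk j k t) \<le> 4 * norm (q^(2*j+1)) ^ k"
proof -
  define u where "u = q^(2*j+1)"
  have a: "norm (2 * u^k / of_nat k) \<le> 2 * norm u ^ k"
  proof (cases "k = 0")
    case True then show ?thesis by simp
  next
    case False
    have "norm (2 * u^k / of_nat k) = 2 * norm u ^ k / real k" by (simp add: norm_mult norm_divide norm_power)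
    also have "\<dots> \<le> 2 * norm u ^ k / 1" using False by (intro divide_left_mono) auto
    finally show ?thesis by simp
  qed
  have b: "norm (1 - (of_real (cos (2 * real k * t)) :: complex)) \<le> 2"
  proof -
    have "norm (1 - (of_real (cos (2 * real k * t)) :: complex)) = \<bar>1 - cos (2 * real k * t)\<bar>"
      by (metis norm_of_real of_real_1 of_real_diff)
    also have "\<dots> \<le> 2" using cos_ge_minus_one[of "2 * real k * t"] cos_le_one[of "2 * real k * t"] by linarith
    finally show ?thesis .
  qed
  have "norm (gk j k t) = norm (2 * u^k / of_nat k) * norm (1 - (of_real (cos (2 * real k * t)) :: complex))"
    unfolding gk_def u_def[symmetric] by (simp only: norm_mult)
  also have "\<dots> \<le> (2 * norm u ^ k) * 2" by (intro mult_mono a b) auto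
  finally show ?thesis unfolding u_def by simp
qed

end

context jt begin

lemma fj_int:
  assumes n: "n \<noteq> 0"
  shows "((\<lambda>t. of_real (cos (2 * real n * t)) * fj j t) has_integral
           (- of_real pi * (q^(2*j+1))^n / of_nat n)) {0..pi}"
proof -
  define u where "u = q^(2*j+1)"
  define h where "h k t = of_real (cos (2 * real n * t)) * gk j k t" for k t
  have hcont: "continuous_on {0..pi} (h k)" for k
    unfolding h_def gk_def by (intro continuous_intros)
  have hbd: "norm (h k t) \<le> 4 * norm u ^ k" for k t
  proof -
    have "norm (h k t) = \<bar>cos (2 * real n * t)\<bar> * norm (gk j k t)"
      unfolding h_def by (simp add: norm_mult)
    also have "\<dots> \<le> 1 * (4 * norm u ^ k)"
      using gk_bound[of j k t] by (intro mult_mono) (auto simp: u_def)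
    finally show ?thesis by simp
  qed
  have hsm: "summable (\<lambda>k. 4 * norm u ^ k)"
    using u_lt1[of j] by (intro summable_mult summable_geometric) (simp add: u_def)
  define I where "I k = 2 * u^k / of_nat k * (0 - (if k = n then of_real pi / 2 else 0))" for k
  have hint: "(h k has_integral I k) {0..pi}" for k
  proof -
    have "((\<lambda>t. 2 * u^k / of_nat k * (of_real (cos (2 * real n * t)) - of_real (cos (2 * real n * t)) * of_real (cos (2 * real k * t))))
      has_integral I k) {0..pi}"
      unfolding I_def by (intro has_integral_mult_right has_integral_diff cos_int1 cos_int2 n)
    moreover have "(\<lambda>t. 2 * u^k / of_nat k * (of_real (cos (2 * real n * t)) - of_real (cos (2 * real n * t)) * of_real (cos (2 * real k * t)))) = h k"
      by (rule ext) (cases "k = 0", simp_all add: h_def gk_def u_def field_simps)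
    ultimately show ?thesis by simp
  qed
  have S2: "((\<lambda>t. \<Sum>k. h k t) has_integral (\<Sum>k. I k)) {0..pi}"
    by (rule series_has_integral(2)[OF hcont hbd hsm hint])
  have "I = (\<lambda>k. if k = n then - of_real pi * u^n / of_nat n else 0)"
    by (rule ext) (simp add: I_def)
  then have "I sums (- of_real pi * u^n / of_nat n)"
    using sums_single[of n "\<lambda>_. - of_real pi * u^n / of_nat n"] by simp
  then have v: "(\<Sum>k. I k) = - of_real pi * u^n / of_nat n" by (simp add: sums_iff)
  have "(\<lambda>t. \<Sum>k. h k t) = (\<lambda>t. of_real (cos (2 * real n * t)) * fj j t)"
  proof (rule ext)
    fix t
    have "of_real (cos (2 * real n * t)) * fj j t = (\<Sum>k. of_real (cos (2 * real n * t)) * gk j k t)"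
      using sums_mult[OF fj_sums[of j t], of "of_real (cos (2 * real n * t))"] by (simp add: sums_iff)
    then show "(\<Sum>k. h k t) = of_real (cos (2 * real n * t)) * fj j t" by (simp add: h_def)
  qed
  then show ?thesis using S2 v by (simp add: u_def)
qed

lemma K_int:
  assumes n: "n \<noteq> 0"
  shows "((\<lambda>t. of_real (cos (2 * real n * t)) * F t) has_integral
           (- of_real pi * q^n / (of_nat n * (1 - q^(2*n))))) {0..pi}"
proof -
  define f where "f j t = of_real (cos (2 * real n * t)) * fj j t" for j t
  have fcont: "continuous_on {0..pi} (f j)" for j
    unfolding f_def by (intro continuous_intros fj_cont)
  have fbd: "norm (f j t) \<le> 4 * (norm q ^ (2*j+1) / (1 - norm q))" for j t
  proof -
    have "norm (f j t) = \<bar>cos (2 * real n * t)\<bar> * norm (fj j t)"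
      unfolding f_def by (simp add: norm_mult)
    also have "\<dots> \<le> 1 * (4 * (norm q ^ (2*j+1) / (1 - norm q)))"
      using fj_bound[of j t] by (intro mult_mono) auto
    finally show ?thesis by simp
  qed
  have fsm: "summable (\<lambda>j. 4 * (norm q ^ (2*j+1) / (1 - norm q)))"
    by (intro summable_mult Sbound_summable)
  have fint: "(f j has_integral (- of_real pi * (q^(2*j+1))^n / of_nat n)) {0..pi}" for j
    unfolding f_def by (rule fj_int[OF n])
  have S2: "((\<lambda>t. \<Sum>j. f j t) has_integral (\<Sum>j. - of_real pi * (q^(2*j+1))^n / of_nat n)) {0..pi}"
    by (rule series_has_integral(2)[OF fcont fbd fsm fint])
  have g: "norm (q^(2*n)) < 1" using nq n
    by (simp add: norm_power power_less_one_iff)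
  have "(\<lambda>j. (q^(2*n))^j) sums (1 / (1 - q^(2*n)))" using geometric_sums[OF g] by simp
  then have s1: "(\<lambda>j. (- of_real pi * q^n / of_nat n) * (q^(2*n))^j) sums ((- of_real pi * q^n / of_nat n) * (1 / (1 - q^(2*n))))"
    by (rule sums_mult)
  have e: "(\<lambda>j. (- of_real pi * q^n / of_nat n) * (q^(2*n))^j) = (\<lambda>j. - of_real pi * (q^(2*j+1))^n / of_nat n)"
    by (rule ext) (simp add: power_mult[symmetric] power_add[symmetric] algebra_simps)
  have val: "(- of_real pi * q^n / of_nat n) * (1 / (1 - q^(2*n))) = - of_real pi * q^n / (of_nat n * (1 - q^(2*n)))"
    by (simp add: divide_divide_eq_left)
  have "(\<lambda>j. - of_real pi * (q^(2*j+1))^n / of_nat n) sums (- of_real pi * q^n / (of_nat n * (1 - q^(2*n))))"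
    using s1 unfolding e val .
  then have v: "(\<Sum>j. - of_real pi * (q^(2*j+1))^n / of_nat n) = - of_real pi * q^n / (of_nat n * (1 - q^(2*n)))"
    by (simp add: sums_iff)
  have "(\<lambda>t. \<Sum>j. f j t) = (\<lambda>t. of_real (cos (2 * real n * t)) * F t)"
  proof (rule ext)
    fix t
    have "summable (\<lambda>j. fj j t)"
      by (rule summable_norm_cancel, rule summable_comparison_test'[OF fsm]) (use fj_bound in auto)
    then show "(\<Sum>j. f j t) = of_real (cos (2 * real n * t)) * F t"
      unfolding F_sum f_def by (rule suminf_mult)
  qed
  then show ?thesis using S2 v by simp
qed

end

lemma gauss_summable:
  fixes s a c :: real assumes s: "s > 0" and a: "a > 0"
  shows "summable (\<lambda>m. real (Suc m) * exp (-(s * (a * real (Suc m)^2 + c * real (Suc m)))))"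
proof -
  have lim: "((\<lambda>m::nat. real (Suc m) * exp (-(s * (a * real (Suc m)^2 + c * real (Suc m)))) * 2^m) \<longlongrightarrow> 0) sequentially"
    using s a by real_asymp
  then have "eventually (\<lambda>m. real (Suc m) * exp (-(s * (a * real (Suc m)^2 + c * real (Suc m)))) * 2^m < 1) sequentially"
    by (rule order_tendstoD) simp
  then have ev: "eventually (\<lambda>m. norm (real (Suc m) * exp (-(s * (a * real (Suc m)^2 + c * real (Suc m))))) \<le> (1/2)^m) sequentially"
  proof (rule eventually_mono)
    fix m assume h: "real (Suc m) * exp (-(s * (a * real (Suc m)^2 + c * real (Suc m)))) * 2^m < 1"
    have "(2::real)^m > 0" by simp
    then have "real (Suc m) * exp (-(s * (a * real (Suc m)^2 + c * real (Suc m)))) \<le> 1 / 2^m"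
      using h by (simp add: field_simps)
    then show "norm (real (Suc m) * exp (-(s * (a * real (Suc m)^2 + c * real (Suc m))))) \<le> (1/2)^m"
      by (simp add: power_divide)
  qed
  show ?thesis
    by (rule summable_comparison_test_ev[OF ev]) (simp add: summable_geometric)
qed

lemma bij_pos: "bij_betw (\<lambda>m::nat. int (Suc m)) UNIV {0<..}"
  by (rule bij_betw_byWitness[where f'="\<lambda>n. nat n - 1"]) (auto simp: image_def intro!: exI[of _ "nat _ - 1"])

lemma bij_neg: "bij_betw (\<lambda>m::nat. - int (Suc m)) UNIV {..<0}"
  by (rule bij_betw_byWitness[where f'="\<lambda>n. nat (-n) - 1"]) (auto simp: image_def intro!: exI[of _ "nat (-_) - 1"])

lemma int_has_sum_split:
  fixes f :: "int \<Rightarrow> complex"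
  assumes "summable (\<lambda>m. norm (f (int (Suc m))))" "(\<lambda>m. f (int (Suc m))) sums A"
    and "summable (\<lambda>m. norm (f (- int (Suc m))))" "(\<lambda>m. f (- int (Suc m))) sums B"
  shows "(f has_sum (A + B)) (UNIV - {0})"
proof -
  have p: "(f has_sum A) {0<..}"
    using norm_summable_imp_has_sum[OF assms(1,2)] has_sum_reindex_bij_betw[OF bij_pos, of f A] by simp
  have n: "(f has_sum B) {..<0}"
    using norm_summable_imp_has_sum[OF assms(3,4)] has_sum_reindex_bij_betw[OF bij_neg, of f B] by simp
  have "(f has_sum (A + B)) ({0<..} \<union> {..<0})" by (rule has_sum_Un_disjoint[OF p n]) auto
  moreover have "{0<..} \<union> {..<0} = UNIV - {0::int}" by auto
  ultimately show ?thesis by simp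
qed

lemma has_sum_add_zero:
  fixes f :: "int \<Rightarrow> complex"
  assumes "(f has_sum S) (UNIV - {0})" "f 0 = 0" shows "(f has_sum S) UNIV"
proof -
  have "(f has_sum S) (UNIV - {0}) = (f has_sum S) UNIV"
    by (rule has_sum_cong_neutral) (use assms(2) in auto)
  then show ?thesis using assms(1) by simp
qed

context jt begin

lemma F_cont: "continuous_on A F"
proof -
  have c: "continuous_on A (\<lambda>t. S (xt (g t)))" if "continuous_on A g" for g
    by (rule continuous_on_compose2[OF S_cont, of _ "\<lambda>t. xt (g t)"])
       (auto intro: continuous_on_compose2[OF xt_cont that])
  show ?thesis unfolding F_def by (intro continuous_intros c)
qed

lemma psiV_int:
  fixes V :: "nat \<Rightarrow> complex"
  assumes V: "summable (\<lambda>m. real (Suc m) * norm (V m))"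
  shows "summable (\<lambda>m. (-1)^(Suc m) * V m * q^(Suc m) / (1 - q^(2*Suc m)))"
    and "((\<lambda>t. (\<Sum>m. (-1)^(Suc m) * of_nat (Suc m) * V m * of_real (cos (2 * real (Suc m) * t))) * F t)
          has_integral (- of_real pi * (\<Sum>m. (-1)^(Suc m) * V m * q^(Suc m) / (1 - q^(2*Suc m))))) {0..pi}"
proof -
  have "bounded (F ` {0..pi})"
    by (rule compact_imp_bounded[OF compact_continuous_image[OF F_cont compact_Icc]])
  then obtain B where "\<forall>x\<in>F ` {0..pi}. norm x \<le> B" unfolding bounded_iff by blast
  then have B: "\<And>t. t \<in> {0..pi} \<Longrightarrow> norm (F t) \<le> B" by auto
  define c where "c m = (-1)^(Suc m) * of_nat (Suc m) * V m" for m
  define f where "f m t = c m * (of_real (cos (2 * real (Suc m) * t)) * F t)" for m t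
  define T where "T m = (-1)^(Suc m) * V m * q^(Suc m) / (1 - q^(2*Suc m))" for m
  have nc: "norm (c m) = real (Suc m) * norm (V m)" for m unfolding c_def by (simp only: norm_mult norm_power norm_minus_cancel norm_one power_one norm_of_nat)
  have fcont: "continuous_on {0..pi} (f m)" for m
    unfolding f_def by (intro continuous_intros F_cont)
  have fbd: "norm (f m t) \<le> real (Suc m) * norm (V m) * B" if "t \<in> {0..pi}" for m t
  proof -
    have "norm (f m t) = norm (c m) * (\<bar>cos (2 * real (Suc m) * t)\<bar> * norm (F t))"
      unfolding f_def by (simp add: norm_mult)
    also have "\<dots> \<le> norm (c m) * (1 * B)"
      using B[OF that] by (intro mult_left_mono mult_mono) auto
    finally show ?thesis unfolding nc by simp
  qed
  have fsm: "summable (\<lambda>m. real (Suc m) * norm (V m) * B)" by (intro summable_mult2 V)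
  define I where "I m = c m * (- of_real pi * q^(Suc m) / (of_nat (Suc m) * (1 - q^(2*Suc m))))" for m
  have fint: "(f m has_integral I m) {0..pi}" for m
    unfolding f_def I_def by (intro has_integral_mult_right K_int) simp
  have S1: "I sums integral {0..pi} (\<lambda>t. \<Sum>m. f m t)"
    and S2: "((\<lambda>t. \<Sum>m. f m t) has_integral (\<Sum>m. I m)) {0..pi}"
    using series_has_integral[OF fcont fbd fsm fint] by auto
  have IT: "I m = - of_real pi * T m" for m
  proof -
    have d: "1 - q^(2*Suc m) \<noteq> 0" by (rule one_minus_nz) simp
    have e: "(of_nat (Suc m) :: complex) \<noteq> 0" by (simp del: of_nat_Suc)
    show ?thesis unfolding I_def T_def c_def using d e by (simp add: field_simps del: of_nat_Suc)
  qed
  have "(\<lambda>m. (- 1 / of_real pi) * I m) sums ((- 1 / of_real pi) * integral {0..pi} (\<lambda>t. \<Sum>m. f m t))"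
    by (rule sums_mult[OF S1])
  moreover have "(\<lambda>m. (- 1 / of_real pi) * I m) = T" by (rule ext) (simp add: IT)
  ultimately have sT: "T sums ((- 1 / of_real pi) * integral {0..pi} (\<lambda>t. \<Sum>m. f m t))" by simp
  have Tdef: "T = (\<lambda>m. (-1)^(Suc m) * V m * q^(Suc m) / (1 - q^(2*Suc m)))" by (rule ext) (simp only: T_def)
  show "summable (\<lambda>m. (-1)^(Suc m) * V m * q^(Suc m) / (1 - q^(2*Suc m)))"
    using sums_summable[OF sT] unfolding Tdef .
  have sumI: "(\<Sum>m. I m) = - of_real pi * (\<Sum>m. T m)"
  proof -
    have "(\<Sum>m. I m) = (\<Sum>m. - of_real pi * T m)" by (simp only: IT)
    also have "\<dots> = - of_real pi * (\<Sum>m. T m)" by (rule suminf_mult[OF sums_summable[OF sT]])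
    finally show ?thesis .
  qed
  have "(\<lambda>t. \<Sum>m. f m t) = (\<lambda>t. (\<Sum>m. (-1)^(Suc m) * of_nat (Suc m) * V m * of_real (cos (2 * real (Suc m) * t))) * F t)"
  proof (rule ext)
    fix t
    have sm: "summable (\<lambda>m. (-1)^(Suc m) * of_nat (Suc m) * V m * of_real (cos (2 * real (Suc m) * t)))"
    proof (rule summable_norm_cancel, rule summable_comparison_test'[OF V])
      fix m show "norm (norm ((-1)^(Suc m) * of_nat (Suc m) * V m * of_real (cos (2 * real (Suc m) * t)) :: complex)) \<le> real (Suc m) * norm (V m)"
        by (simp add: norm_mult norm_power mult_left_le abs_cos_le_one del: of_nat_Suc)
    qed
    show "(\<Sum>m. f m t) = (\<Sum>m. (-1)^(Suc m) * of_nat (Suc m) * V m * of_real (cos (2 * real (Suc m) * t))) * F t"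
      unfolding f_def c_def suminf_mult2[OF sm] by (simp add: mult_ac)
  qed
  then show "((\<lambda>t. (\<Sum>m. (-1)^(Suc m) * of_nat (Suc m) * V m * of_real (cos (2 * real (Suc m) * t))) * F t)
          has_integral (- of_real pi * (\<Sum>m. (-1)^(Suc m) * V m * q^(Suc m) / (1 - q^(2*Suc m))))) {0..pi}"
    using S2 sumI unfolding Tdef by simp
qed

end

lemma L_eq_F:
  fixes L F :: "real \<Rightarrow> complex"
  assumes Lc: "continuous_on {0..pi} L" and Fc: "continuous_on {0..pi} F"
    and L0: "L 0 = 0" and F0: "F 0 = 0"
    and e: "\<And>t. t \<in> {0..pi} \<Longrightarrow> exp (L t) = exp (F t)"
  shows "\<And>t. t \<in> {0..pi} \<Longrightarrow> L t = F t"
proof -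
  define D where "D t = L t - F t" for t
  have Dc: "continuous_on {0..pi} D" unfolding D_def by (intro continuous_intros Lc Fc)
  have De: "exp (D t) = 1" if "t \<in> {0..pi}" for t
    using e[OF that] unfolding D_def by (simp add: exp_diff)
  have "D constant_on {0..pi}"
  proof (rule continuous_discrete_range_constant[OF _ Dc])
    show "connected {0..pi}" by simp
    fix x assume x: "x \<in> {0..pi}"
    show "\<exists>e>0. \<forall>y. y \<in> {0..pi} \<and> D y \<noteq> D x \<longrightarrow> e \<le> norm (D y - D x)"
    proof (intro exI[of _ "2*pi"] conjI allI impI)
      show "0 < 2 * pi" by simp
      fix y assume y: "y \<in> {0..pi} \<and> D y \<noteq> D x"
      have "exp (D y - D x) = 1" using De[of y] De[OF x] y by (simp add: exp_diff)
      then obtain n where re: "Re (D y - D x) = 0" and im: "Im (D y - D x) = real_of_int (2 * n) * pi"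
        unfolding exp_eq_1 by blast
      have "n \<noteq> 0"
      proof
        assume "n = 0"
        then have "D y - D x = 0" using re im by (simp add: complex_eq_iff)
        then show False using y by simp
      qed
      then have "2 * pi \<le> \<bar>real_of_int (2 * n) * pi\<bar>"
        by (auto simp: abs_mult)
      also have "\<dots> = \<bar>Im (D y - D x)\<bar>" using im by simp
      also have "\<dots> \<le> norm (D y - D x)" by (rule abs_Im_le_cmod)
      finally show "2 * pi \<le> norm (D y - D x)" .
    qed
  qed
  then obtain c where c: "\<And>t. t \<in> {0..pi} \<Longrightarrow> D t = c" unfolding constant_on_def by blast
  have "D 0 = 0" unfolding D_def using L0 F0 by simp
  then have "c = 0" using c[of 0] by simp
  then show "\<And>t. t \<in> {0..pi} \<Longrightarrow> L t = F t" using c unfolding D_def by simp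
qed

theorem theorem4:
  fixes z :: complex and a b :: real and L :: "real \<Rightarrow> complex"
  assumes hz: "Im z > 0" and ha: "a > 0"
    and L_cont: "continuous_on {0..pi} L" and L0: "L 0 = 0"
    and L_log: "\<forall>t\<in>{0..pi}. exp (L t) = theta4 z t / theta4 z 0"
  shows
    "summable (\<lambda>m. let n = Suc m in
        (-1) ^ n * qpow z (a * real n ^ 2 + (b + 1) * real n) / (1 - qpow z (2 * real n)))
     \<and> ((\<lambda>t. psi1 z a b t * L t) has_integral
         (- of_real pi * (\<Sum>m. let n = Suc m in
            (-1) ^ n * qpow z (a * real n ^ 2 + (b + 1) * real n) / (1 - qpow z (2 * real n)))))
        {0..pi}
     \<and> summable (\<lambda>m. let n = Suc m in
        (-1) ^ n * qpow z (a * real n ^ 2 + (- b + 1) * real n) / (1 - qpow z (2 * real n)))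
     \<and> ((\<lambda>t. psi2 z a b t * L t) has_integral
         (of_real pi * (\<Sum>m. let n = Suc m in
            (-1) ^ n * qpow z (a * real n ^ 2 + (- b + 1) * real n) / (1 - qpow z (2 * real n)))))
        {0..pi}
     \<and> (\<forall>t. ((\<lambda>n::int. (-1) powi n * qpow z (a * of_int n ^ 2 + b * of_int n)
                 * of_int n * of_real (cos (2 * of_int n * t))) has_sum psi z a b t) UNIV)
     \<and> (let I = integral {0..pi} (\<lambda>t. psi z a b t * L t) in
          (\<lambda>t. psi z a b t * L t) integrable_on {0..pi}
        \<and> (\<lambda>n::int. (-1) powi n * qpow z (a * of_int n ^ 2 + b * of_int n)
              / (qpow z (- of_int n) - qpow z (of_int n))) summable_on (UNIV - {0})
        \<and> I = - of_real pi * (\<Sum>\<^sub>\<infinity>n\<in>UNIV - {0::int}. (-1) powi n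
              * qpow z (a * of_int n ^ 2 + b * of_int n) / (qpow z (- of_int n) - qpow z (of_int n)))
        \<and> (\<lambda>n::int. (-1) powi n * exp (2 * of_real pi * \<i> * of_real (a * of_int n ^ 2 + b * of_int n) * z)
              / sinh (2 * of_real pi * \<i> * of_int n * z)) summable_on (UNIV - {0})
        \<and> I / of_real pi = 1/2 * (\<Sum>\<^sub>\<infinity>n\<in>UNIV - {0::int}. (-1) powi n
              * exp (2 * of_real pi * \<i> * of_real (a * of_int n ^ 2 + b * of_int n) * z)
              / sinh (2 * of_real pi * \<i> * of_int n * z)))"
proof -
  define w where "w = 2 * of_real pi * \<i> * z"
  define q where "q = exp w"
  define s where "s = 2 * pi * Im z"
  have s0: "s > 0" using hz by (simp add: s_def)
  have Rew: "Re w = - s" by (simp add: w_def s_def)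
  have nq: "norm q < 1" unfolding q_def using s0 by (simp add: norm_exp_eq_Re Rew)
  have q0: "q \<noteq> 0" unfolding q_def by simp
  interpret jt q by unfold_locales (rule nq, rule q0)
  have qp: "qpow z \<alpha> = exp (of_real \<alpha> * w)" for \<alpha>
    unfolding qpow_def w_def by (simp add: mult_ac)
  have qpn: "qpow z (real n) = q^n" for n :: nat
    unfolding qp q_def by (simp add: exp_of_nat_mult[symmetric])
  have qp_add: "qpow z (\<alpha> + \<beta>) = qpow z \<alpha> * qpow z \<beta>" for \<alpha> \<beta>
    unfolding qp by (simp add: distrib_right exp_add)
  have qp_norm: "norm (qpow z \<alpha>) = exp (- (s * \<alpha>))" for \<alpha>
    unfolding qp by (simp add: norm_exp_eq_Re Rew)
  have qp_nz: "qpow z \<alpha> \<noteq> 0" for \<alpha> unfolding qp by simp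
  have th: "theta4 z t = G (xt t) / cc 0" for t
  proof -
    have "(\<lambda>n::int. (-1) powi n * qpow z (of_int n ^ 2) * exp (2 * \<i> * of_int n * of_real t))
        = (\<lambda>n. (-1) powi n * q powi (n^2) * xt t powi n)"
    proof (rule ext)
      fix n :: int
      have "qpow z (of_int n ^ 2) = exp (of_int (n^2) * w)" unfolding qp by simp
      also have "\<dots> = q powi (n^2)" unfolding q_def by (rule exp_int_mult)
      finally have a: "qpow z (of_int n ^ 2) = q powi (n^2)" .
      have "exp (2 * \<i> * of_int n * of_real t) = exp (of_int n * (2 * \<i> * of_real t))" by (simp add: mult_ac)
      also have "\<dots> = xt t powi n" unfolding xt_def by (rule exp_int_mult)
      finally show "(-1) powi n * qpow z (of_int n ^ 2) * exp (2 * \<i> * of_int n * of_real t) = (-1) powi n * q powi (n^2) * xt t powi n"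
        using a by simp
    qed
    then show ?thesis unfolding theta4_def using infsumI[OF theta_circle[of t]] by simp
  qed
  have F0: "F 0 = 0" unfolding F_def by simp
  have eLF: "exp (L t) = exp (F t)" if "t \<in> {0..pi}" for t
  proof -
    have "exp (L t) = theta4 z t / theta4 z 0" using L_log that by blast
    also have "\<dots> = G (xt t) / G (xt 0)" unfolding th using cc0_nz by (simp add: field_simps)
    also have "\<dots> = exp (S (xt t) + S (xt (-t))) / exp (S (xt 0) + S (xt 0))"
      using G_circle[of t] G_circle[of 0] by simp
    also have "\<dots> = exp (S (xt t) + S (xt (-t)) - (S (xt 0) + S (xt 0)))" by (rule exp_diff[symmetric])
    also have "\<dots> = exp (F t)" by (simp only: F_def mult_2)
    finally show ?thesis .
  qed
  have LF: "L t = F t" if "t \<in> {0..pi}" for t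
    by (rule L_eq_F[OF L_cont F_cont L0 F0 eLF that])
  define V1 where "V1 m = qpow z (a * real (Suc m) ^ 2 + b * real (Suc m))" for m
  define V2 where "V2 m = qpow z (a * real (Suc m) ^ 2 - b * real (Suc m))" for m
  have gs: "summable (\<lambda>m. real (Suc m) * exp (-(s * (a * real (Suc m)^2 + c * real (Suc m)))))" for c
    by (rule gauss_summable[OF s0 ha])
  have V1s: "summable (\<lambda>m. real (Suc m) * norm (V1 m))"
    using gs[of b] by (simp only: V1_def qp_norm)
  have V2s: "summable (\<lambda>m. real (Suc m) * norm (V2 m))"
  proof -
    have "a * real (Suc m) ^ 2 - b * real (Suc m) = a * real (Suc m)^2 + (- b) * real (Suc m)" for m by simp
    then show ?thesis using gs[of "-b"] by (simp only: V2_def qp_norm)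
  qed
  have psi1_eq: "psi1 z a b t = (\<Sum>m. (-1)^(Suc m) * of_nat (Suc m) * V1 m * of_real (cos (2 * real (Suc m) * t)))" for t
    by (simp only: psi1_def V1_def Let_def)
  have psi2_eq: "psi2 z a b t = - (\<Sum>m. (-1)^(Suc m) * of_nat (Suc m) * V2 m * of_real (cos (2 * real (Suc m) * t)))" for t
    by (simp only: psi2_def V2_def Let_def)
  have q2n: "qpow z (2 * real n) = q^(2*n)" for n :: nat
    using qpn[of "2*n"] by simp
  have Y1e: "(\<lambda>m. (-1)^(Suc m) * V1 m * q^(Suc m) / (1 - q^(2*Suc m)))
      = (\<lambda>m. let n = Suc m in (-1) ^ n * qpow z (a * real n ^ 2 + (b + 1) * real n) / (1 - qpow z (2 * real n)))"
  proof (rule ext)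
    fix m
    have e: "a * real (Suc m) ^ 2 + (b + 1) * real (Suc m) = (a * real (Suc m) ^ 2 + b * real (Suc m)) + real (Suc m)"
      by (simp add: algebra_simps)
    show "(-1)^(Suc m) * V1 m * q^(Suc m) / (1 - q^(2*Suc m))
      = (let n = Suc m in (-1) ^ n * qpow z (a * real n ^ 2 + (b + 1) * real n) / (1 - qpow z (2 * real n)))"
    proof -
      have "qpow z (a * real (Suc m) ^ 2 + (b + 1) * real (Suc m)) = V1 m * q^(Suc m)"
        unfolding e qp_add[of "a * real (Suc m) ^ 2 + b * real (Suc m)" "real (Suc m)"] qpn V1_def ..
      then show ?thesis unfolding Let_def q2n by (simp only: mult.assoc)
    qed
  qed
  have Y2e: "(\<lambda>m. (-1)^(Suc m) * V2 m * q^(Suc m) / (1 - q^(2*Suc m)))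
      = (\<lambda>m. let n = Suc m in (-1) ^ n * qpow z (a * real n ^ 2 + (- b + 1) * real n) / (1 - qpow z (2 * real n)))"
  proof (rule ext)
    fix m
    have e: "a * real (Suc m) ^ 2 + (- b + 1) * real (Suc m) = (a * real (Suc m) ^ 2 - b * real (Suc m)) + real (Suc m)"
      by (simp add: algebra_simps)
    show "(-1)^(Suc m) * V2 m * q^(Suc m) / (1 - q^(2*Suc m))
      = (let n = Suc m in (-1) ^ n * qpow z (a * real n ^ 2 + (- b + 1) * real n) / (1 - qpow z (2 * real n)))"
    proof -
      have "qpow z (a * real (Suc m) ^ 2 + (- b + 1) * real (Suc m)) = V2 m * q^(Suc m)"
        unfolding e qp_add[of "a * real (Suc m) ^ 2 - b * real (Suc m)" "real (Suc m)"] qpn V2_def ..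
      then show ?thesis unfolding Let_def q2n by (simp only: mult.assoc)
    qed
  qed
  define Y1 where "Y1 = (\<Sum>m. let n = Suc m in (-1) ^ n * qpow z (a * real n ^ 2 + (b + 1) * real n) / (1 - qpow z (2 * real n)))"
  define Y2 where "Y2 = (\<Sum>m. let n = Suc m in (-1) ^ n * qpow z (a * real n ^ 2 + (- b + 1) * real n) / (1 - qpow z (2 * real n)))"
  have sY1: "summable (\<lambda>m. let n = Suc m in (-1) ^ n * qpow z (a * real n ^ 2 + (b + 1) * real n) / (1 - qpow z (2 * real n)))"
    using psiV_int(1)[OF V1s] unfolding Y1e .
  have sY2: "summable (\<lambda>m. let n = Suc m in (-1) ^ n * qpow z (a * real n ^ 2 + (- b + 1) * real n) / (1 - qpow z (2 * real n)))"
    using psiV_int(1)[OF V2s] unfolding Y2e .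
  have hI1: "((\<lambda>t. psi1 z a b t * L t) has_integral (- of_real pi * Y1)) {0..pi}"
  proof -
    have "((\<lambda>t. (\<Sum>m. (-1)^(Suc m) * of_nat (Suc m) * V1 m * of_real (cos (2 * real (Suc m) * t))) * F t)
          has_integral (- of_real pi * Y1)) {0..pi}"
      using psiV_int(2)[OF V1s] unfolding Y1e Y1_def .
    then show ?thesis
      by (rule has_integral_cong[THEN iffD1, rotated]) (simp add: psi1_eq LF)
  qed
  have hI2: "((\<lambda>t. psi2 z a b t * L t) has_integral (of_real pi * Y2)) {0..pi}"
  proof -
    have "((\<lambda>t. (\<Sum>m. (-1)^(Suc m) * of_nat (Suc m) * V2 m * of_real (cos (2 * real (Suc m) * t))) * F t)
          has_integral (- of_real pi * Y2)) {0..pi}"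
      using psiV_int(2)[OF V2s] unfolding Y2e Y2_def .
    then have "((\<lambda>t. - ((\<Sum>m. (-1)^(Suc m) * of_nat (Suc m) * V2 m * of_real (cos (2 * real (Suc m) * t))) * F t))
          has_integral (- (- of_real pi * Y2))) {0..pi}"
      by (rule has_integral_neg)
    then have "((\<lambda>t. - ((\<Sum>m. (-1)^(Suc m) * of_nat (Suc m) * V2 m * of_real (cos (2 * real (Suc m) * t))) * F t))
          has_integral (of_real pi * Y2)) {0..pi}"
      unfolding minus_mult_left minus_minus .
    then show ?thesis
      by (rule has_integral_cong[THEN iffD1, rotated]) (simp add: psi2_eq LF)
  qed
  have pm1: "(-1::complex) powi (- int k) = (-1)^k" for k
    by (simp add: power_int_minus power_inverse[symmetric])
  have hs_psi: "((\<lambda>n::int. (-1) powi n * qpow z (a * of_int n ^ 2 + b * of_int n) * of_int n * of_real (cos (2 * of_int n * t))) has_sum psi z a b t) UNIV" for t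
  proof -
    define f where "f n = (-1) powi n * qpow z (a * of_int n ^ 2 + b * of_int n) * of_int n * of_real (cos (2 * of_int n * t))" for n :: int
    define p1 where "p1 m = (-1)^(Suc m) * of_nat (Suc m) * V1 m * of_real (cos (2 * real (Suc m) * t))" for m
    define p2 where "p2 m = (-1)^(Suc m) * of_nat (Suc m) * V2 m * of_real (cos (2 * real (Suc m) * t))" for m
    have fp: "f (int (Suc m)) = p1 m" for m
      unfolding f_def p1_def V1_def power_int_of_nat by (simp only: of_int_of_nat_eq mult_ac)
    have fn: "f (- int (Suc m)) = - p2 m" for m
    proof -
      have e1: "a * of_int (- int (Suc m)) ^ 2 + b * of_int (- int (Suc m)) = a * real (Suc m) ^ 2 - b * real (Suc m)"
        by (simp only: of_int_minus of_int_of_nat_eq power2_eq_square mult_minus_right minus_minus diff_conv_add_uminus)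
      have e2: "cos (2 * real_of_int (- int (Suc m)) * t) = cos (2 * real (Suc m) * t)"
        by (simp del: of_nat_Suc)
      show ?thesis unfolding f_def p2_def V2_def e1 e2 pm1
        by (simp del: of_nat_Suc)
    qed
    have np1: "norm (p1 m) \<le> real (Suc m) * norm (V1 m)" for m
      unfolding p1_def by (simp add: norm_mult norm_power mult_left_le abs_cos_le_one del: of_nat_Suc)
    have np2: "norm (p2 m) \<le> real (Suc m) * norm (V2 m)" for m
      unfolding p2_def by (simp add: norm_mult norm_power mult_left_le abs_cos_le_one del: of_nat_Suc)
    have sp1: "summable (\<lambda>m. norm (p1 m))" by (rule summable_comparison_test'[OF V1s]) (use np1 in auto)
    have sp2: "summable (\<lambda>m. norm (p2 m))" by (rule summable_comparison_test'[OF V2s]) (use np2 in auto)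
    have s1: "(\<lambda>m. f (int (Suc m))) sums psi1 z a b t"
      unfolding fp psi1_eq p1_def[symmetric] by (rule summable_sums[OF summable_norm_cancel[OF sp1]])
    have s2: "(\<lambda>m. f (- int (Suc m))) sums psi2 z a b t"
      unfolding fn psi2_eq p2_def[symmetric] by (rule sums_minus[OF summable_sums[OF summable_norm_cancel[OF sp2]]])
    have "(f has_sum (psi1 z a b t + psi2 z a b t)) (UNIV - {0})"
    proof -
      have n1: "summable (\<lambda>m. norm (f (int (Suc m))))" unfolding fp by (rule sp1)
      have n2: "summable (\<lambda>m. norm (f (- int (Suc m))))" unfolding fn norm_minus_cancel by (rule sp2)
      show ?thesis by (rule int_has_sum_split[OF n1 s1 n2 s2])
    qed
    then have "(f has_sum (psi1 z a b t + psi2 z a b t)) UNIV"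
      by (rule has_sum_add_zero) (simp add: f_def)
    then show ?thesis unfolding f_def psi_def .
  qed
  have hI: "((\<lambda>t. psi z a b t * L t) has_integral (- of_real pi * Y1 + of_real pi * Y2)) {0..pi}"
  proof -
    have "(\<lambda>t. psi z a b t * L t) = (\<lambda>t. psi1 z a b t * L t + psi2 z a b t * L t)"
      by (rule ext) (simp add: psi_def distrib_right)
    then show ?thesis using has_integral_add[OF hI1 hI2] by simp
  qed
  have qp_neg: "qpow z (- \<alpha>) = inverse (qpow z \<alpha>)" for \<alpha>
    unfolding qp by (simp add: exp_minus[symmetric])
  define hh where "hh = (\<lambda>n::int. (-1) powi n * qpow z (a * of_int n ^ 2 + b * of_int n) / (qpow z (- of_int n) - qpow z (of_int n)))"
  define y1 where "y1 = (\<lambda>m. let n = Suc m in (-1) ^ n * qpow z (a * real n ^ 2 + (b + 1) * real n) / (1 - qpow z (2 * real n)))"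
  define y2 where "y2 = (\<lambda>m. let n = Suc m in (-1) ^ n * qpow z (a * real n ^ 2 + (- b + 1) * real n) / (1 - qpow z (2 * real n)))"
  have qb1: "qpow z (a * real n ^ 2 + (b + 1) * real n) = qpow z (a * real n ^ 2 + b * real n) * q^n" for n :: nat
  proof -
    have e: "a * real n ^ 2 + (b + 1) * real n = (a * real n ^ 2 + b * real n) + real n" by (simp add: algebra_simps)
    show ?thesis unfolding e qp_add[of "a * real n ^ 2 + b * real n" "real n"] qpn ..
  qed
  have qb2: "qpow z (a * real n ^ 2 + (- b + 1) * real n) = qpow z (a * real n ^ 2 - b * real n) * q^n" for n :: nat
  proof -
    have e: "a * real n ^ 2 + (- b + 1) * real n = (a * real n ^ 2 - b * real n) + real n" by (simp add: algebra_simps)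
    show ?thesis unfolding e qp_add[of "a * real n ^ 2 - b * real n" "real n"] qpn ..
  qed
  have hp: "hh (int (Suc m)) = y1 m" for m
  proof -
    define n where "n = Suc m"
    have Q: "q^n \<noteq> 0" using q0 by simp
    have "hh (int n) = (-1)^n * qpow z (a * real n ^ 2 + b * real n) / (inverse (q^n) - q^n)"
      unfolding hh_def qp_neg by (simp add: qpn)
    also have "\<dots> = (-1)^n * (qpow z (a * real n ^ 2 + b * real n) * q^n) / (1 - q^(2*n))"
      using Q by (simp add: field_simps power_mult power2_eq_square mult_2)
    also have "\<dots> = y1 m" unfolding y1_def Let_def n_def[symmetric] qb1 q2n by simp
    finally show ?thesis unfolding n_def .
  qed
  have hn: "hh (- int (Suc m)) = - y2 m" for m
  proof -
    define n where "n = Suc m"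
    have Q: "q^n \<noteq> 0" using q0 by simp
    have e1: "a * real_of_int (- int n) ^ 2 + b * real_of_int (- int n) = a * real n ^ 2 - b * real n"
      by (simp only: of_int_minus of_int_of_nat_eq power2_eq_square mult_minus_right minus_minus diff_conv_add_uminus)
    have "hh (- int n) = (-1)^n * qpow z (a * real n ^ 2 - b * real n) / (q^n - inverse (q^n))"
    proof -
      have e2: "qpow z (- real_of_int (- int n)) = q^n" by (simp add: qpn)
      have e3: "qpow z (real_of_int (- int n)) = inverse (q^n)" by (simp add: qp_neg qpn)
      show ?thesis unfolding hh_def e1 e2 e3 pm1 ..
    qed
    also have "\<dots> = - ((-1)^n * (qpow z (a * real n ^ 2 - b * real n) * q^n) / (1 - q^(2*n)))"
    proof -
      have "1 - q^(n+n) \<noteq> 0" by (rule one_minus_nz) (simp add: n_def)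
      then have D: "q^n * q^n \<noteq> 1" by (simp add: power_add)
      show ?thesis using Q D by (simp add: field_simps power_mult power2_eq_square mult_2)
    qed
    also have "\<dots> = - y2 m" unfolding y2_def Let_def n_def[symmetric] qb2 q2n by simp
    finally show ?thesis unfolding n_def .
  qed
  have ny: "norm (qpow z \<alpha> / (1 - qpow z (2 * real n))) \<le> exp (- (s * \<alpha>)) / (1 - norm q)" if "n > 0" for \<alpha> n
  proof -
    have d: "1 - norm q \<le> norm (1 - q^(2*n))" by (rule one_minus_ge) (use that in simp)
    have "norm (qpow z \<alpha> / (1 - qpow z (2 * real n))) = exp (- (s * \<alpha>)) / norm (1 - q^(2*n))"
      by (simp add: norm_divide qp_norm q2n)
    also have "\<dots> \<le> exp (- (s * \<alpha>)) / (1 - norm q)"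
    proof (rule divide_left_mono)
      have "0 < 1 - norm q" using nq by simp
      then show "0 < norm (1 - q^(2*n)) * (1 - norm q)" using d by (intro mult_pos_pos) auto
    qed (use d in auto)
    finally show ?thesis .
  qed
  have ny1: "summable (\<lambda>m. norm (y1 m))"
  proof (rule summable_comparison_test'[where g="\<lambda>m. real (Suc m) * exp (-(s * (a * real (Suc m)^2 + (b+1) * real (Suc m)))) / (1 - norm q)"])
    show "summable (\<lambda>m. real (Suc m) * exp (-(s * (a * real (Suc m)^2 + (b+1) * real (Suc m)))) / (1 - norm q))"
      by (intro summable_divide gs)
    fix m
    have "norm (y1 m) \<le> exp (-(s * (a * real (Suc m)^2 + (b+1) * real (Suc m)))) / (1 - norm q)"
      using ny[of "Suc m" "a * real (Suc m)^2 + (b+1) * real (Suc m)"] unfolding y1_def Let_def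
      by (simp add: norm_mult norm_divide norm_power del: of_nat_Suc)
    also have "\<dots> \<le> real (Suc m) * exp (-(s * (a * real (Suc m)^2 + (b+1) * real (Suc m)))) / (1 - norm q)"
      using mult_right_mono[of 1 "real (Suc m)" "exp (-(s * (a * real (Suc m)^2 + (b+1) * real (Suc m))))"] nq
      by (intro divide_right_mono) auto
    finally show "norm (norm (y1 m)) \<le> real (Suc m) * exp (-(s * (a * real (Suc m)^2 + (b+1) * real (Suc m)))) / (1 - norm q)"
      by simp
  qed
  have ny2: "summable (\<lambda>m. norm (y2 m))"
  proof (rule summable_comparison_test'[where g="\<lambda>m. real (Suc m) * exp (-(s * (a * real (Suc m)^2 + (- b+1) * real (Suc m)))) / (1 - norm q)"])
    show "summable (\<lambda>m. real (Suc m) * exp (-(s * (a * real (Suc m)^2 + (- b+1) * real (Suc m)))) / (1 - norm q))"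
      by (intro summable_divide gs)
    fix m
    have "norm (y2 m) \<le> exp (-(s * (a * real (Suc m)^2 + (- b+1) * real (Suc m)))) / (1 - norm q)"
      using ny[of "Suc m" "a * real (Suc m)^2 + (- b+1) * real (Suc m)"] unfolding y2_def Let_def
      by (simp add: norm_mult norm_divide norm_power del: of_nat_Suc)
    also have "\<dots> \<le> real (Suc m) * exp (-(s * (a * real (Suc m)^2 + (- b+1) * real (Suc m)))) / (1 - norm q)"
      using mult_right_mono[of 1 "real (Suc m)" "exp (-(s * (a * real (Suc m)^2 + (- b+1) * real (Suc m))))"] nq
      by (intro divide_right_mono) auto
    finally show "norm (norm (y2 m)) \<le> real (Suc m) * exp (-(s * (a * real (Suc m)^2 + (- b+1) * real (Suc m)))) / (1 - norm q)"
      by simp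
  qed
  have Y1s: "y1 sums Y1" unfolding y1_def Y1_def by (rule summable_sums[OF sY1])
  have Y2s: "y2 sums Y2" unfolding y2_def Y2_def by (rule summable_sums[OF sY2])
  have hhs: "(hh has_sum (Y1 + - Y2)) (UNIV - {0})"
  proof (rule int_has_sum_split)
    show "summable (\<lambda>m. norm (hh (int (Suc m))))" unfolding hp by (rule ny1)
    show "(\<lambda>m. hh (int (Suc m))) sums Y1" unfolding hp by (rule Y1s)
    show "summable (\<lambda>m. norm (hh (- int (Suc m))))" unfolding hn norm_minus_cancel by (rule ny2)
    show "(\<lambda>m. hh (- int (Suc m))) sums (- Y2)" unfolding hn by (rule sums_minus[OF Y2s])
  qed
  define kk where "kk = (\<lambda>n::int. (-1) powi n * exp (2 * of_real pi * \<i> * of_real (a * of_int n ^ 2 + b * of_int n) * z)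
              / sinh (2 * of_real pi * \<i> * of_int n * z))"
  have kh: "kk n = -2 * hh n" for n
  proof -
    define A where "A = qpow z (of_int n)"
    define B where "B = qpow z (- of_int n)"
    define X where "X = (-1) powi n * qpow z (a * of_int n ^ 2 + b * of_int n)"
    have e1: "exp (2 * of_real pi * \<i> * of_real (a * of_int n ^ 2 + b * of_int n) * z) = qpow z (a * of_int n ^ 2 + b * of_int n)"
      by (simp only: qpow_def)
    have e2: "sinh (2 * of_real pi * \<i> * of_int n * z) = (A - B) / 2"
      unfolding sinh_def A_def B_def qpow_def by (simp add: mult_ac scaleR_conv_of_real field_simps)
    have "kk n = X / ((A - B) / 2)" unfolding kk_def e1 e2 X_def by (simp only: mult.assoc)
    also have "\<dots> = -2 * (X / (B - A))"
      by (cases "A = B") (simp_all add: field_simps)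
    also have "X / (B - A) = hh n" unfolding hh_def X_def A_def B_def ..
    finally show ?thesis .
  qed
  have kks: "(kk has_sum (-2 * (Y1 + - Y2))) (UNIV - {0})"
  proof -
    have "kk = (\<lambda>n. -2 * hh n)" by (rule ext) (rule kh)
    then show ?thesis using has_sum_cmult_right[OF hhs, of "-2"] by simp
  qed
  have Ieq: "integral {0..pi} (\<lambda>t. psi z a b t * L t) = - of_real pi * Y1 + of_real pi * Y2"
    by (rule integral_unique[OF hI])
  have hh_inf: "infsum hh (UNIV - {0}) = Y1 + - Y2" by (rule infsumI[OF hhs])
  have kk_inf: "infsum kk (UNIV - {0}) = -2 * (Y1 + - Y2)" by (rule infsumI[OF kks])
  show ?thesis
    apply (intro conjI)
    subgoal by (rule sY1)
    subgoal using hI1 unfolding Y1_def .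
    subgoal by (rule sY2)
    subgoal using hI2 unfolding Y2_def .
    subgoal using hs_psi by blast
    subgoal unfolding Let_def
      apply (intro conjI)
      subgoal by (rule has_integral_integrable[OF hI])
      subgoal using has_sum_imp_summable[OF hhs] unfolding hh_def .
      subgoal unfolding Ieq hh_inf[unfolded hh_def] by (simp add: algebra_simps)
      subgoal using has_sum_imp_summable[OF kks] unfolding kk_def .
      subgoal unfolding Ieq kk_inf[unfolded kk_def] by (simp add: field_simps)
      done
    done
qed

end
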